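(* A sub-space-time $(M,D,g,T)$ is chronological if and only if, for every horizontal timelike future directed curve $\gamma\colon I\to M$, the pullback $\gamma^{-1}(\mathscr{A})=\{\gamma^{-1}(A):A\in\mathscr{A}\}$ of the Alexandrov topology $\mathscr{A}$ to the parameter interval $I\subset\mathbb{R}$ is finer than the standard (subspace) topology on $I$.
   Context: A sub-space-time is a quadruple $(M,D,g,T)$ where $M$ is a connected smooth manifold, $D$ is a smooth bracket-generating distribution on $M$ of rank $k$ with $2\le k<\dim M$, $g$ is a smoothly varying non-degenerate symmetric bilinear form on the fibres $D_p$ of index $1$, and $T$ is a globally defined smooth horizontal vector field with $g(T,T)<0$. A horizontal curve is an absolutely continuous curve with $\dot\gamma\in D$ a.e. and $\dot\gamma$ locally square integrable w.r.t. an auxiliary Riemannian metric; it is timelike future directed (t.f.d.) if a.e. $g(\dot\gamma,\dot\gamma)<0$ and $g(T,\dot\gamma)<0$. $p\ll q$ means there is a horizontal t.f.d. curve from $p$ to $q$; $I^+(p)=\{q:p\ll q\}$, $I^-(p)=\{q:q\ll p\}$. The Alexandrov topology $\mathscr{A}$ is generated by the subbasis $\{I^+(p),I^-(p):p\in M\}$. $M$ is chronological if there is no $p\in M$ with $p\ll p$. *)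

theory Defs
  imports "HOL-Analysis.Analysis"
begin

text \<open>C^k on an open set, via iterated directional (Frechet) derivatives.
  For finite-dimensional domains this is the usual notion of C^k.\<close>

primrec Ck_on :: "nat \<Rightarrow> 'e::euclidean_space set \<Rightarrow> ('e \<Rightarrow> 'f::real_normed_vector) \<Rightarrow> bool" where
  "Ck_on 0 S f = continuous_on S f"
| "Ck_on (Suc k) S f =
     ((\<forall>x\<in>S. f differentiable (at x)) \<and>
      (\<forall>v. Ck_on k S (\<lambda>x. frechet_derivative f (at x) v)))"

definition smooth_on :: "'e::euclidean_space set \<Rightarrow> ('e \<Rightarrow> 'f::real_normed_vector) \<Rightarrow> bool" where
  "smooth_on S f \<longleftrightarrow> open S \<and> (\<forall>k. Ck_on k S f)"

type_synonym ('m, 'e) chart = "'m set \<times> ('m \<Rightarrow> 'e)"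

definition chart_inv :: "('m, 'e) chart \<Rightarrow> 'e \<Rightarrow> 'm" where
  "chart_inv c = inv_into (fst c) (snd c)"

definition transition :: "('m, 'e) chart \<Rightarrow> ('m, 'e) chart \<Rightarrow> 'e \<Rightarrow> 'e" where
  "transition c c' = snd c' \<circ> chart_inv c"

definition smooth_atlas ::
  "('m::topological_space, 'e::euclidean_space) chart set \<Rightarrow> bool" where
  "smooth_atlas A \<longleftrightarrow>
     (\<Union>(fst ` A) = UNIV) \<and>
     (\<forall>c\<in>A. open (fst c) \<and> inj_on (snd c) (fst c) \<and> continuous_on (fst c) (snd c) \<and>
             open (snd c ` fst c) \<and> continuous_on (snd c ` fst c) (chart_inv c)) \<and>
     (\<forall>c\<in>A. \<forall>c'\<in>A. smooth_on (snd c ` (fst c \<inter> fst c')) (transition c c'))"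

definition chart_change :: "('m, 'e::euclidean_space) chart \<Rightarrow> ('m, 'e) chart \<Rightarrow> 'm \<Rightarrow> 'e \<Rightarrow> 'e" where
  "chart_change c c' p = frechet_derivative (transition c c') (at (snd c p))"

text \<open>
  D c p   : the fibre D_p, written in the coordinates of chart c (a subspace of 'e)
  g c p   : the bilinear form g_p on D_p, written in the coordinates of chart c
  T c p   : the vector T(p), written in the coordinates of chart c
  All three are required to transform correctly under chart changes, so they
  represent chart-independent objects on M.\<close>

definition horizontal_field_on ::
  "('m, 'e::euclidean_space) chart \<Rightarrow> (('m, 'e) chart \<Rightarrow> 'm \<Rightarrow> 'e set) \<Rightarrow> 'e set \<Rightarrow> ('e \<Rightarrow> 'e) \<Rightarrow> bool" where
  "horizontal_field_on c D W X \<longleftrightarrow>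
     W \<subseteq> snd c ` fst c \<and> smooth_on W X \<and> (\<forall>x\<in>W. X x \<in> D c (chart_inv c x))"

text \<open>Iterated Lie brackets (in coordinates) of smooth horizontal local vector fields.\<close>
inductive_set bracket_fields ::
  "('m, 'e::euclidean_space) chart \<Rightarrow> (('m, 'e) chart \<Rightarrow> 'm \<Rightarrow> 'e set) \<Rightarrow> ('e set \<times> ('e \<Rightarrow> 'e)) set"
  for c D where
  base: "horizontal_field_on c D W X \<Longrightarrow> (W, X) \<in> bracket_fields c D"
| brk: "(W, X) \<in> bracket_fields c D \<Longrightarrow> (W', Y) \<in> bracket_fields c D \<Longrightarrow>
        (W \<inter> W', \<lambda>x. frechet_derivative Y (at x) (X x) - frechet_derivative X (at x) (Y x))
          \<in> bracket_fields c D"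

definition bracket_generating ::
  "('m, 'e::euclidean_space) chart set \<Rightarrow> (('m, 'e) chart \<Rightarrow> 'm \<Rightarrow> 'e set) \<Rightarrow> bool" where
  "bracket_generating A D \<longleftrightarrow>
     (\<forall>c\<in>A. \<forall>p\<in>fst c.
        span {X (snd c p) | W X. (W, X) \<in> bracket_fields c D \<and> snd c p \<in> W} = UNIV)"

definition smooth_distribution ::
  "('m, 'e::euclidean_space) chart set \<Rightarrow> (('m, 'e) chart \<Rightarrow> 'm \<Rightarrow> 'e set) \<Rightarrow> nat \<Rightarrow> bool" where
  "smooth_distribution A D k \<longleftrightarrow>
     (\<forall>c\<in>A. \<forall>p\<in>fst c. subspace (D c p) \<and> dim (D c p) = k) \<and>
     (\<forall>c\<in>A. \<forall>c'\<in>A. \<forall>p\<in>fst c \<inter> fst c'. D c' p = chart_change c c' p ` D c p) \<and>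
     (\<forall>c\<in>A. \<forall>p\<in>fst c. \<exists>W X. open W \<and> snd c p \<in> W \<and> W \<subseteq> snd c ` fst c \<and>
          (\<forall>i<k. smooth_on W (X i)) \<and>
          (\<forall>x\<in>W. D c (chart_inv c x) = span {X i x | i. i < k}))"

definition index_one_form :: "'e::euclidean_space set \<Rightarrow> ('e \<Rightarrow> 'e \<Rightarrow> real) \<Rightarrow> bool" where
  "index_one_form V b \<longleftrightarrow>
     (\<forall>u\<in>V. \<forall>v\<in>V. b u v = b v u) \<and>
     (\<forall>u\<in>V. \<forall>v\<in>V. \<forall>w\<in>V. \<forall>r s. b (r *\<^sub>R u + s *\<^sub>R v) w = r * b u w + s * b v w) \<and>
     (\<forall>u\<in>V. (\<forall>v\<in>V. b u v = 0) \<longrightarrow> u = 0) \<and>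
     (\<exists>W. subspace W \<and> W \<subseteq> V \<and> dim W = 1 \<and> (\<forall>w\<in>W. w \<noteq> 0 \<longrightarrow> b w w < 0)) \<and>
     (\<nexists>W. subspace W \<and> W \<subseteq> V \<and> dim W = 2 \<and> (\<forall>w\<in>W. w \<noteq> 0 \<longrightarrow> b w w < 0))"

definition smooth_metric ::
  "('m, 'e::euclidean_space) chart set \<Rightarrow> (('m, 'e) chart \<Rightarrow> 'm \<Rightarrow> 'e set) \<Rightarrow>
   (('m, 'e) chart \<Rightarrow> 'm \<Rightarrow> 'e \<Rightarrow> 'e \<Rightarrow> real) \<Rightarrow> bool" where
  "smooth_metric A D g \<longleftrightarrow>
     (\<forall>c\<in>A. \<forall>p\<in>fst c. index_one_form (D c p) (g c p)) \<and>
     (\<forall>c\<in>A. \<forall>c'\<in>A. \<forall>p\<in>fst c \<inter> fst c'. \<forall>u\<in>D c p. \<forall>v\<in>D c p.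
          g c' p (chart_change c c' p u) (chart_change c c' p v) = g c p u v) \<and>
     (\<forall>c\<in>A. \<forall>W X Y. horizontal_field_on c D W X \<longrightarrow> horizontal_field_on c D W Y \<longrightarrow>
          smooth_on W (\<lambda>x. g c (chart_inv c x) (X x) (Y x)))"

definition time_orientation ::
  "('m, 'e::euclidean_space) chart set \<Rightarrow> (('m, 'e) chart \<Rightarrow> 'm \<Rightarrow> 'e set) \<Rightarrow>
   (('m, 'e) chart \<Rightarrow> 'm \<Rightarrow> 'e \<Rightarrow> 'e \<Rightarrow> real) \<Rightarrow> (('m, 'e) chart \<Rightarrow> 'm \<Rightarrow> 'e) \<Rightarrow> bool" where
  "time_orientation A D g T \<longleftrightarrow>
     (\<forall>c\<in>A. \<forall>p\<in>fst c. T c p \<in> D c p \<and> g c p (T c p) (T c p) < 0) \<and>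
     (\<forall>c\<in>A. \<forall>c'\<in>A. \<forall>p\<in>fst c \<inter> fst c'. T c' p = chart_change c c' p (T c p)) \<and>
     (\<forall>c\<in>A. smooth_on (snd c ` fst c) (\<lambda>x. T c (chart_inv c x)))"

text \<open>A sub-space-time (M,D,g,T): M = UNIV of a connected Hausdorff second countable
  space 'm with a smooth atlas A modelled on 'e (so dim M = DIM('e)); D of rank k.\<close>

definition sub_space_time ::
  "('m::{t2_space, second_countable_topology}, 'e::euclidean_space) chart set \<Rightarrow>
   (('m, 'e) chart \<Rightarrow> 'm \<Rightarrow> 'e set) \<Rightarrow> nat \<Rightarrow>
   (('m, 'e) chart \<Rightarrow> 'm \<Rightarrow> 'e \<Rightarrow> 'e \<Rightarrow> real) \<Rightarrow> (('m, 'e) chart \<Rightarrow> 'm \<Rightarrow> 'e) \<Rightarrow> bool" where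
  "sub_space_time A D k g T \<longleftrightarrow>
     connected (UNIV :: 'm set) \<and> smooth_atlas A \<and>
     2 \<le> k \<and> k < DIM('e) \<and>
     smooth_distribution A D k \<and> bracket_generating A D \<and>
     smooth_metric A D g \<and> time_orientation A D g T"

definition abs_continuous_on :: "real set \<Rightarrow> (real \<Rightarrow> 'e::real_normed_vector) \<Rightarrow> bool" where
  "abs_continuous_on J f \<longleftrightarrow>
     (\<forall>\<epsilon>>0. \<exists>\<delta>>0. \<forall>(n::nat) (a::nat \<Rightarrow> real) b.
        (\<forall>i<n. a i \<le> b i \<and> {a i..b i} \<subseteq> J) \<and>
        (\<forall>i<n. \<forall>j<n. i \<noteq> j \<longrightarrow> b i \<le> a j \<or> b j \<le> a i) \<and>
        (\<Sum>i<n. b i - a i) < \<delta> \<longrightarrow>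
        (\<Sum>i<n. norm (f (b i) - f (a i))) < \<epsilon>)"

definition tfd_curve ::
  "('m::topological_space, 'e::euclidean_space) chart set \<Rightarrow> (('m, 'e) chart \<Rightarrow> 'm \<Rightarrow> 'e set) \<Rightarrow>
   (('m, 'e) chart \<Rightarrow> 'm \<Rightarrow> 'e \<Rightarrow> 'e \<Rightarrow> real) \<Rightarrow> (('m, 'e) chart \<Rightarrow> 'm \<Rightarrow> 'e) \<Rightarrow>
   real set \<Rightarrow> (real \<Rightarrow> 'm) \<Rightarrow> bool" where
  "tfd_curve A D g T I \<gamma> \<longleftrightarrow>
     is_interval I \<and>
     (\<forall>t\<in>I. \<exists>c\<in>A. \<exists>\<epsilon>>0.
        let J = I \<inter> cball t \<epsilon>; f = snd c \<circ> \<gamma> in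
        \<gamma> ` J \<subseteq> fst c \<and>
        abs_continuous_on J f \<and>
        (\<lambda>s. (norm (vector_derivative f (at s within J)))\<^sup>2) integrable_on J \<and>
        (AE s in lebesgue_on J.
           \<exists>v. (f has_vector_derivative v) (at s within J) \<and>
               v \<in> D c (\<gamma> s) \<and> g c (\<gamma> s) v v < 0 \<and> g c (\<gamma> s) (T c (\<gamma> s)) v < 0))"

definition chron_rel ::
  "('m::topological_space, 'e::euclidean_space) chart set \<Rightarrow> (('m, 'e) chart \<Rightarrow> 'm \<Rightarrow> 'e set) \<Rightarrow>
   (('m, 'e) chart \<Rightarrow> 'm \<Rightarrow> 'e \<Rightarrow> 'e \<Rightarrow> real) \<Rightarrow> (('m, 'e) chart \<Rightarrow> 'm \<Rightarrow> 'e) \<Rightarrow> 'm \<Rightarrow> 'm \<Rightarrow> bool" where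
  "chron_rel A D g T p q \<longleftrightarrow>
     (\<exists>a b \<gamma>. a < b \<and> tfd_curve A D g T {a..b} \<gamma> \<and> \<gamma> a = p \<and> \<gamma> b = q)"

definition I_plus where "I_plus A D g T p = {q. chron_rel A D g T p q}"
definition I_minus where "I_minus A D g T p = {q. chron_rel A D g T q p}"

text \<open>Alexandrov topology on M = UNIV, generated by the subbasis of all I^+(p), I^-(p)
  (with the usual convention that M itself is open).\<close>
definition alexandrov_topology where
  "alexandrov_topology A D g T =
     topology_generated_by
       ({UNIV} \<union> range (I_plus A D g T) \<union> range (I_minus A D g T))"

definition chronological where
  "chronological A D g T \<longleftrightarrow> \<not> (\<exists>p. chron_rel A D g T p p)"

end

theory Submission
  imports Defs
begin


definition good where
  "good D g T c \<gamma> J s \<longleftrightarrow> (\<exists>v. ((snd c \<circ> \<gamma>) has_vector_derivative v) (at s within J) \<and>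
               v \<in> D c (\<gamma> s) \<and> g c (\<gamma> s) v v < 0 \<and> g c (\<gamma> s) (T c (\<gamma> s)) v < 0)"

definition loc where
  "loc D g T c \<gamma> J \<longleftrightarrow> \<gamma> ` J \<subseteq> fst c \<and> abs_continuous_on J (snd c \<circ> \<gamma>) \<and>
      (\<lambda>s. (norm (vector_derivative (snd c \<circ> \<gamma>) (at s within J)))\<^sup>2) integrable_on J \<and>
      (AE s in lebesgue_on J. good D g T c \<gamma> J s)"

lemma tfd_curve_iff:
  "tfd_curve A D g T I \<gamma> \<longleftrightarrow> is_interval I \<and> (\<forall>t\<in>I. \<exists>c\<in>A. \<exists>\<epsilon>>0. loc D g T c \<gamma> (I \<inter> cball t \<epsilon>))"
  by (simp add: tfd_curve_def loc_def good_def Let_def)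

lemma ae_neg:
  assumes "S \<in> sets lebesgue"
  shows "(AE x in lebesgue_on S. P x) \<longleftrightarrow> (\<exists>N. negligible N \<and> (\<forall>x\<in>S - N. P x))"
proof -
  have "(AE x in lebesgue_on S. P x) \<longleftrightarrow> (AE x in lebesgue. x \<in> S \<longrightarrow> P x)"
    using assms by (simp add: AE_restrict_space_iff)
  also have "\<dots> \<longleftrightarrow> (\<exists>N. negligible N \<and> (\<forall>x\<in>S - N. P x))"
    unfolding eventually_ae_filter_negligible by blast
  finally show ?thesis .
qed

lemma interval_cball_sets:
  fixes I :: "real set"
  assumes "is_interval I"
  shows "I \<inter> cball t e \<in> sets lebesgue"
proof -
  have "convex (I \<inter> cball t e)" using assms
    by (simp add: convex_Int is_interval_convex_1)
  moreover have "bounded (I \<inter> cball t e)" by (simp add: bounded_Int)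
  ultimately show ?thesis using measurable_convex fmeasurableD by blast
qed

lemma abs_contD:
  assumes "abs_continuous_on J f" "e > 0"
  obtains d where "d > 0" "\<And>(n::nat) a b. (\<forall>i<n. a i \<le> b i \<and> {a i..b i} \<subseteq> J) \<Longrightarrow>
        (\<forall>i<n. \<forall>j<n. i \<noteq> j \<longrightarrow> b i \<le> a j \<or> b j \<le> a i) \<Longrightarrow>
        (\<Sum>i<n. b i - a i) < d \<Longrightarrow>
        (\<Sum>i<n. norm (f (b i) - f (a i))) < e"
proof -
  from assms obtain d where "d > 0" and "\<forall>(n::nat) a b.
        (\<forall>i<n. a i \<le> b i \<and> {a i..b i} \<subseteq> J) \<and>
        (\<forall>i<n. \<forall>j<n. i \<noteq> j \<longrightarrow> b i \<le> a j \<or> b j \<le> a i) \<and>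
        (\<Sum>i<n. b i - a i) < d \<longrightarrow>
        (\<Sum>i<n. norm (f (b i) - f (a i))) < e"
    unfolding abs_continuous_on_def by blast
  note H = this
  show ?thesis
  proof (rule that[OF H(1)])
    fix n :: nat and a b :: "nat \<Rightarrow> real"
    assume h: "\<forall>i<n. a i \<le> b i \<and> {a i..b i} \<subseteq> J"
      "\<forall>i<n. \<forall>j<n. i \<noteq> j \<longrightarrow> b i \<le> a j \<or> b j \<le> a i" "(\<Sum>i<n. b i - a i) < d"
    show "(\<Sum>i<n. norm (f (b i) - f (a i))) < e"
      using H(2)[rule_format, of n a b] h by blast
  qed
qed

lemma abs_contI:
  assumes "\<And>e. e > 0 \<Longrightarrow> \<exists>d>0. \<forall>(n::nat) a b. (\<forall>i<n. a i \<le> b i \<and> {a i..b i} \<subseteq> J) \<longrightarrow>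
        (\<forall>i<n. \<forall>j<n. i \<noteq> j \<longrightarrow> b i \<le> a j \<or> b j \<le> a i) \<longrightarrow>
        (\<Sum>i<n. b i - a i) < d \<longrightarrow>
        (\<Sum>i<n. norm (f (b i) - f (a i))) < e"
  shows "abs_continuous_on J f"
  unfolding abs_continuous_on_def
proof (intro allI impI)
  fix e :: real assume "e > 0"
  then obtain d where "d > 0" and H: "\<forall>(n::nat) a b. (\<forall>i<n. a i \<le> b i \<and> {a i..b i} \<subseteq> J) \<longrightarrow>
        (\<forall>i<n. \<forall>j<n. i \<noteq> j \<longrightarrow> b i \<le> a j \<or> b j \<le> a i) \<longrightarrow>
        (\<Sum>i<n. b i - a i) < d \<longrightarrow>
        (\<Sum>i<n. norm (f (b i) - f (a i))) < e" using assms by blast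
  show "\<exists>\<delta>>0. \<forall>(n::nat) a b. (\<forall>i<n. a i \<le> b i \<and> {a i..b i} \<subseteq> J) \<and>
        (\<forall>i<n. \<forall>j<n. i \<noteq> j \<longrightarrow> b i \<le> a j \<or> b j \<le> a i) \<and>
        (\<Sum>i<n. b i - a i) < \<delta> \<longrightarrow>
        (\<Sum>i<n. norm (f (b i) - f (a i))) < e"
    using \<open>d > 0\<close> H by blast
qed

lemma abs_cont_cont:
  assumes "abs_continuous_on J f" "is_interval J"
  shows "continuous_on J f"
  unfolding continuous_on_iff
proof (intro ballI allI impI)
  fix x e :: real assume x: "x \<in> J" and e: "e > 0"
  obtain d where d: "d > 0" and H: "\<And>(n::nat) a b.
        (\<forall>i<n. a i \<le> b i \<and> {a i..b i} \<subseteq> J) \<Longrightarrow>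
        (\<forall>i<n. \<forall>j<n. i \<noteq> j \<longrightarrow> b i \<le> a j \<or> b j \<le> a i) \<Longrightarrow>
        (\<Sum>i<n. b i - a i) < d \<Longrightarrow>
        (\<Sum>i<n. norm (f (b i) - f (a i))) < e"
    using abs_contD[OF assms(1) e] by blast
  show "\<exists>d>0. \<forall>x'\<in>J. dist x' x < d \<longrightarrow> dist (f x') (f x) < e"
  proof (intro exI conjI ballI impI)
    fix x' assume x': "x' \<in> J" "dist x' x < d"
    have mm: "min x x' \<in> J" "max x x' \<in> J" using x x'(1) by (auto simp: min_def max_def)
    have sub: "{min x x'..max x x'} \<subseteq> J"
    proof
      fix y assume "y \<in> {min x x'..max x x'}"
      then have "min x x' \<le> y" "y \<le> max x x'" by auto
      then show "y \<in> J" using assms(2) mm unfolding is_interval_1 by blast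
    qed
    have len: "(\<Sum>i<Suc 0. (\<lambda>_. max x x') i - (\<lambda>_. min x x') i) < d"
      using x'(2) by (simp add: dist_real_def)
    have "(\<Sum>i<Suc 0. norm (f ((\<lambda>_. max x x') i) - f ((\<lambda>_. min x x') i))) < e"
    proof (rule H[OF _ _ len])
      show "\<forall>i<Suc 0. (\<lambda>_. min x x') i \<le> (\<lambda>_. max x x') i \<and> {(\<lambda>_. min x x') i..(\<lambda>_. max x x') i} \<subseteq> J"
        using sub by simp
    qed simp
    then have "norm (f (max x x') - f (min x x')) < e" by simp
    moreover have "dist (f x') (f x) = norm (f (max x x') - f (min x x'))"
    proof (cases "x \<le> x'")
      case True then show ?thesis by (simp add: dist_norm max_def min_def)
    next
      case False then show ?thesis by (simp add: dist_norm max_def min_def norm_minus_commute)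
    qed
    ultimately show "dist (f x') (f x) < e" by simp
  qed (rule d)
qed

lemma abs_cont_cong:
  assumes "abs_continuous_on J f" "\<And>s. s \<in> J \<Longrightarrow> f' s = f s"
  shows "abs_continuous_on J f'"
proof (rule abs_contI)
  fix e :: real assume "e > 0"
  then obtain d where d: "d > 0" and H: "\<And>(n::nat) a b.
        (\<forall>i<n. a i \<le> b i \<and> {a i..b i} \<subseteq> J) \<Longrightarrow>
        (\<forall>i<n. \<forall>j<n. i \<noteq> j \<longrightarrow> b i \<le> a j \<or> b j \<le> a i) \<Longrightarrow>
        (\<Sum>i<n. b i - a i) < d \<Longrightarrow>
        (\<Sum>i<n. norm (f (b i) - f (a i))) < e"
    using abs_contD[OF assms(1)] by blast
  show "\<exists>d>0. \<forall>(n::nat) a b. (\<forall>i<n. a i \<le> b i \<and> {a i..b i} \<subseteq> J) \<longrightarrow>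
        (\<forall>i<n. \<forall>j<n. i \<noteq> j \<longrightarrow> b i \<le> a j \<or> b j \<le> a i) \<longrightarrow>
        (\<Sum>i<n. b i - a i) < d \<longrightarrow>
        (\<Sum>i<n. norm (f' (b i) - f' (a i))) < e"
  proof (intro exI conjI allI impI, rule d)
    fix n :: nat and a b :: "nat \<Rightarrow> real"
    assume h: "\<forall>i<n. a i \<le> b i \<and> {a i..b i} \<subseteq> J"
      "\<forall>i<n. \<forall>j<n. i \<noteq> j \<longrightarrow> b i \<le> a j \<or> b j \<le> a i" "(\<Sum>i<n. b i - a i) < d"
    have "(\<Sum>i<n. norm (f' (b i) - f' (a i))) = (\<Sum>i<n. norm (f (b i) - f (a i)))"
    proof (rule sum.cong[OF refl])
      fix i assume "i \<in> {..<n}"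
      then have "a i \<le> b i" "{a i..b i} \<subseteq> J" using h(1) by auto
      then have "a i \<in> J" "b i \<in> J" by auto
      then show "norm (f' (b i) - f' (a i)) = norm (f (b i) - f (a i))" using assms(2) by simp
    qed
    then show "(\<Sum>i<n. norm (f' (b i) - f' (a i))) < e" using H[OF h] by simp
  qed
qed

lemma abs_cont_mono:
  assumes "abs_continuous_on J f" "J' \<subseteq> J"
  shows "abs_continuous_on J' f"
proof (rule abs_contI)
  fix e :: real assume "e > 0"
  then obtain d where d: "d > 0" and H: "\<And>(n::nat) a b.
        (\<forall>i<n. a i \<le> b i \<and> {a i..b i} \<subseteq> J) \<Longrightarrow>
        (\<forall>i<n. \<forall>j<n. i \<noteq> j \<longrightarrow> b i \<le> a j \<or> b j \<le> a i) \<Longrightarrow>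
        (\<Sum>i<n. b i - a i) < d \<Longrightarrow>
        (\<Sum>i<n. norm (f (b i) - f (a i))) < e"
    using abs_contD[OF assms(1)] by blast
  show "\<exists>d>0. \<forall>(n::nat) a b. (\<forall>i<n. a i \<le> b i \<and> {a i..b i} \<subseteq> J') \<longrightarrow>
        (\<forall>i<n. \<forall>j<n. i \<noteq> j \<longrightarrow> b i \<le> a j \<or> b j \<le> a i) \<longrightarrow>
        (\<Sum>i<n. b i - a i) < d \<longrightarrow>
        (\<Sum>i<n. norm (f (b i) - f (a i))) < e"
  proof (intro exI conjI allI impI, rule d)
    fix n :: nat and a b :: "nat \<Rightarrow> real"
    assume h: "\<forall>i<n. a i \<le> b i \<and> {a i..b i} \<subseteq> J'"
      "\<forall>i<n. \<forall>j<n. i \<noteq> j \<longrightarrow> b i \<le> a j \<or> b j \<le> a i" "(\<Sum>i<n. b i - a i) < d"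
    have "\<forall>i<n. a i \<le> b i \<and> {a i..b i} \<subseteq> J" using h(1) assms(2) by blast
    then show "(\<Sum>i<n. norm (f (b i) - f (a i))) < e" using h(2,3) by (rule H)
  qed
qed

lemma not_bot_Icc:
  fixes p q s :: real
  assumes "p < q" "s \<in> {p..q}" "{p..q} \<subseteq> S"
  shows "at s within S \<noteq> bot"
proof -
  have "s islimpt {p..q}" using assms by simp
  then have "s islimpt S" using assms(3) islimpt_subset by blast
  then show ?thesis using trivial_limit_within by blast
qed

lemma Icc_sets: "{p..q::real} \<in> sets lebesgue" by simp

lemma loc_mono:
  assumes L: "loc D g T c \<gamma> J" and S: "J \<in> sets lebesgue" and sub: "{p..q} \<subseteq> J"
  shows "loc D g T c \<gamma> {p..q}"
proof -
  have img: "\<gamma> ` {p..q} \<subseteq> fst c" using L sub unfolding loc_def by blast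
  have ac: "abs_continuous_on {p..q} (snd c \<circ> \<gamma>)" using L sub abs_cont_mono unfolding loc_def by blast
  show ?thesis
  proof (cases "p < q")
    case False
    then have neg: "negligible {p..q}"
      by (metis atLeastAtMost_singleton atLeastatMost_empty linorder_neqE_linordered_idom negligible_empty negligible_sing)
    have "AE s in lebesgue_on {p..q}. good D g T c \<gamma> {p..q} s"
      unfolding ae_neg[OF Icc_sets]
      using neg by blast
    then show ?thesis using img ac neg integrable_negligible unfolding loc_def by blast
  next
    case pq: True
    obtain N where N: "negligible N" "\<And>s. s \<in> J - N \<Longrightarrow> good D g T c \<gamma> J s"
      using L S unfolding loc_def ae_neg[OF S] by blast
    have goodpq: "good D g T c \<gamma> {p..q} s" if "s \<in> {p..q} - N" for s
      using N(2)[of s] that sub has_vector_derivative_within_subset unfolding good_def by blast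
    have ae: "AE s in lebesgue_on {p..q}. good D g T c \<gamma> {p..q} s"
      unfolding ae_neg[OF Icc_sets]
      using N(1) goodpq by blast
    have int1: "(\<lambda>s. (norm (vector_derivative (snd c \<circ> \<gamma>) (at s within J)))\<^sup>2) integrable_on {p..q}"
      using L sub integrable_on_subinterval unfolding loc_def by blast
    have int2: "(\<lambda>s. (norm (vector_derivative (snd c \<circ> \<gamma>) (at s within {p..q})))\<^sup>2) integrable_on {p..q}"
    proof (rule integrable_spike[OF int1 N(1)])
      fix s assume s: "s \<in> {p..q} - N"
      then obtain v where v: "((snd c \<circ> \<gamma>) has_vector_derivative v) (at s within J)"
        using N(2)[of s] sub unfolding good_def by blast
      have "vector_derivative (snd c \<circ> \<gamma>) (at s within J) = v"
        by (rule vector_derivative_within[OF not_bot_Icc[OF pq _ sub] v]) (use s in auto)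
      moreover have "vector_derivative (snd c \<circ> \<gamma>) (at s within {p..q}) = v"
        by (rule vector_derivative_within[OF not_bot_Icc[OF pq _ order_refl]])
           (use s v sub has_vector_derivative_within_subset in auto)
      ultimately show "(norm (vector_derivative (snd c \<circ> \<gamma>) (at s within {p..q})))\<^sup>2 =
          (norm (vector_derivative (snd c \<circ> \<gamma>) (at s within J)))\<^sup>2" by simp
    qed
    show ?thesis using img ac int2 ae unfolding loc_def by blast
  qed
qed

lemma loc_cong:
  assumes L: "loc D g T c \<gamma> J" and eq: "\<And>s. s \<in> J \<Longrightarrow> \<gamma>' s = \<gamma> s"
  shows "loc D g T c \<gamma>' J"
proof -
  have eqf: "(snd c \<circ> \<gamma>') s = (snd c \<circ> \<gamma>) s" if "s \<in> J" for s using eq that by simp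
  have hv: "((snd c \<circ> \<gamma>') has_vector_derivative v) (at s within J) \<longleftrightarrow>
            ((snd c \<circ> \<gamma>) has_vector_derivative v) (at s within J)" if "s \<in> J" for s v
    using has_vector_derivative_transform[of s J "snd c \<circ> \<gamma>" "snd c \<circ> \<gamma>'"]
          has_vector_derivative_transform[of s J "snd c \<circ> \<gamma>'" "snd c \<circ> \<gamma>"] eqf that
    by (metis (full_types))
  have vd: "vector_derivative (snd c \<circ> \<gamma>') (at s within J) = vector_derivative (snd c \<circ> \<gamma>) (at s within J)"
    if "s \<in> J" for s
    unfolding vector_derivative_def using hv[OF that] by simp
  have img: "\<gamma>' ` J \<subseteq> fst c" using L eq unfolding loc_def by auto
  have ac: "abs_continuous_on J (snd c \<circ> \<gamma>')"
    using L eqf abs_cont_cong unfolding loc_def by blast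
  have int: "(\<lambda>s. (norm (vector_derivative (snd c \<circ> \<gamma>') (at s within J)))\<^sup>2) integrable_on J"
  proof (rule integrable_spike[OF _ negligible_empty])
    show "(\<lambda>s. (norm (vector_derivative (snd c \<circ> \<gamma>) (at s within J)))\<^sup>2) integrable_on J"
      using L unfolding loc_def by blast
  qed (use vd in simp)
  have ae: "AE s in lebesgue_on J. good D g T c \<gamma>' J s"
  proof -
    have "AE s in lebesgue_on J. good D g T c \<gamma> J s" using L unfolding loc_def by blast
    moreover have "AE s in lebesgue_on J. s \<in> J"
      by (rule AE_I2) (simp add: space_restrict_space)
    ultimately show ?thesis
      by eventually_elim (auto simp: good_def hv eq)
  qed
  show ?thesis using img ac int ae unfolding loc_def by blast
qed




lemma shift_deriv_iff:
  fixes f :: "real \<Rightarrow> 'a::real_normed_vector"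
  shows "((\<lambda>s. f (s - h)) has_vector_derivative v) (at s' within (\<lambda>s. s + h) ` J) \<longleftrightarrow>
         (f has_vector_derivative v) (at (s' - h) within J)"
proof
  assume H: "((\<lambda>s. f (s - h)) has_vector_derivative v) (at s' within (\<lambda>s. s + h) ` J)"
  have d: "((\<lambda>s. s + h) has_vector_derivative 1) (at (s' - h) within J)"
    by (auto intro!: derivative_eq_intros)
  have img: "(\<lambda>s. s + h) ` J = (\<lambda>s. s + h) ` J" ..
  have H': "((\<lambda>s. f (s - h)) has_vector_derivative v) (at ((\<lambda>s. s + h) (s' - h)) within (\<lambda>s. s + h) ` J)"
    using H by simp
  have "(((\<lambda>s. f (s - h)) \<circ> (\<lambda>s. s + h)) has_vector_derivative (1 *\<^sub>R v)) (at (s' - h) within J)"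
    by (rule vector_diff_chain_within[OF d H'])
  moreover have "((\<lambda>s. f (s - h)) \<circ> (\<lambda>s. s + h)) = f" by (rule ext) simp
  ultimately show "(f has_vector_derivative v) (at (s' - h) within J)" by simp
next
  assume H: "(f has_vector_derivative v) (at (s' - h) within J)"
  have d: "((\<lambda>s. s - h) has_vector_derivative 1) (at s' within (\<lambda>s. s + h) ` J)"
    by (auto intro!: derivative_eq_intros)
  have im: "(\<lambda>s. s - h) ` (\<lambda>s. s + h) ` J = J" by (auto simp: image_iff)
  have H': "(f has_vector_derivative v) (at ((\<lambda>s. s - h) s') within (\<lambda>s. s - h) ` (\<lambda>s. s + h) ` J)"
    using H im by simp
  have "((f \<circ> (\<lambda>s. s - h)) has_vector_derivative (1 *\<^sub>R v)) (at s' within (\<lambda>s. s + h) ` J)"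
    by (rule vector_diff_chain_within[OF d H'])
  then show "((\<lambda>s. f (s - h)) has_vector_derivative v) (at s' within (\<lambda>s. s + h) ` J)"
    by (simp add: o_def)
qed

lemma shift_Icc: "(\<lambda>s. s + h) ` {p..q::real} = {p+h..q+h}"
  by (auto simp: image_iff intro!: bexI[where x="_ - h"])

lemma loc_shift:
  assumes L: "loc D g T c \<gamma> {p..q}"
  shows "loc D g T c (\<lambda>s. \<gamma> (s - h)) {p+h..q+h}"
proof -
  let ?J = "{p..q}" and ?J' = "{p+h..q+h}"
  let ?f = "snd c \<circ> \<gamma>" and ?f' = "snd c \<circ> (\<lambda>s. \<gamma> (s - h))"
  have f'eq: "?f' = (\<lambda>s. ?f (s - h))" by (rule ext) simp
  have J'eq: "?J' = (\<lambda>s. s + h) ` ?J" by (simp add: shift_Icc)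
  have dv: "(?f' has_vector_derivative v) (at s' within ?J') \<longleftrightarrow> (?f has_vector_derivative v) (at (s' - h) within ?J)"
    for s' v unfolding f'eq J'eq by (rule shift_deriv_iff)
  have vd: "vector_derivative ?f' (at s' within ?J') = vector_derivative ?f (at (s' - h) within ?J)" for s'
    unfolding vector_derivative_def dv ..
  have img: "(\<lambda>s. \<gamma> (s - h)) ` ?J' \<subseteq> fst c"
  proof
    fix y assume "y \<in> (\<lambda>s. \<gamma> (s - h)) ` ?J'"
    then obtain s where "s \<in> ?J'" "y = \<gamma> (s - h)" by blast
    then have "s - h \<in> ?J" "y = \<gamma> (s - h)" by auto
    then show "y \<in> fst c" using L unfolding loc_def by blast
  qed
  have ac: "abs_continuous_on ?J' ?f'"
  proof (rule abs_contI)
    fix e :: real assume "e > 0"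
    then obtain d where d: "d > 0" and H: "\<And>(n::nat) a b.
          (\<forall>i<n. a i \<le> b i \<and> {a i..b i} \<subseteq> ?J) \<Longrightarrow>
          (\<forall>i<n. \<forall>j<n. i \<noteq> j \<longrightarrow> b i \<le> a j \<or> b j \<le> a i) \<Longrightarrow>
          (\<Sum>i<n. b i - a i) < d \<Longrightarrow>
          (\<Sum>i<n. norm (?f (b i) - ?f (a i))) < e"
      using abs_contD[of ?J ?f e] L unfolding loc_def by blast
    show "\<exists>d>0. \<forall>(n::nat) a b. (\<forall>i<n. a i \<le> b i \<and> {a i..b i} \<subseteq> ?J') \<longrightarrow>
          (\<forall>i<n. \<forall>j<n. i \<noteq> j \<longrightarrow> b i \<le> a j \<or> b j \<le> a i) \<longrightarrow>
          (\<Sum>i<n. b i - a i) < d \<longrightarrow>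
          (\<Sum>i<n. norm (?f' (b i) - ?f' (a i))) < e"
    proof (intro exI conjI allI impI, rule d)
      fix n :: nat and a b :: "nat \<Rightarrow> real"
      assume h: "\<forall>i<n. a i \<le> b i \<and> {a i..b i} \<subseteq> ?J'"
        "\<forall>i<n. \<forall>j<n. i \<noteq> j \<longrightarrow> b i \<le> a j \<or> b j \<le> a i" "(\<Sum>i<n. b i - a i) < d"
      have h1: "\<forall>i<n. (\<lambda>i. a i - h) i \<le> (\<lambda>i. b i - h) i \<and> {(\<lambda>i. a i - h) i..(\<lambda>i. b i - h) i} \<subseteq> ?J"
      proof (intro allI impI conjI)
        fix i assume "i < n"
        then have "a i \<le> b i" "{a i..b i} \<subseteq> ?J'" using h(1) by auto
        then show "a i - h \<le> b i - h" "{a i - h..b i - h} \<subseteq> ?J"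
          by (auto simp: subset_iff)
      qed
      have h2: "\<forall>i<n. \<forall>j<n. i \<noteq> j \<longrightarrow> (\<lambda>i. b i - h) i \<le> (\<lambda>i. a i - h) j \<or> (\<lambda>i. b i - h) j \<le> (\<lambda>i. a i - h) i"
        using h(2) by auto
      have h3: "(\<Sum>i<n. (\<lambda>i. b i - h) i - (\<lambda>i. a i - h) i) < d" using h(3) by simp
      show "(\<Sum>i<n. norm (?f' (b i) - ?f' (a i))) < e"
        using H[OF h1 h2 h3] by simp
    qed
  qed
  have int: "(\<lambda>s. (norm (vector_derivative ?f' (at s within ?J')))\<^sup>2) integrable_on ?J'"
  proof -
    have "(\<lambda>s. (norm (vector_derivative ?f (at s within ?J)))\<^sup>2) integrable_on cbox p q"
      using L unfolding loc_def by simp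
    from integrable_on_affinity[OF _ this, of 1 "-h"]
    have "(\<lambda>x. (norm (vector_derivative ?f (at (x - h) within ?J)))\<^sup>2) integrable_on
           ((\<lambda>x. x - - h) ` cbox p q)" by simp
    moreover have "(\<lambda>x. x - - h) ` cbox p q = ?J'" using shift_Icc[of h p q] by simp
    ultimately show ?thesis by (simp add: vd)
  qed
  have ae: "AE s in lebesgue_on ?J'. good D g T c (\<lambda>s. \<gamma> (s - h)) ?J' s"
  proof -
    obtain N where N: "negligible N" "\<And>s. s \<in> ?J - N \<Longrightarrow> good D g T c \<gamma> ?J s"
      using L unfolding loc_def ae_neg[OF Icc_sets] by blast
    have "negligible ((+) h ` N)" by (rule negligible_translation[OF N(1)])
    moreover have "good D g T c (\<lambda>s. \<gamma> (s - h)) ?J' s" if s: "s \<in> ?J' - (+) h ` N" for s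
    proof -
      have "s - h \<in> ?J - N" using s by (force simp: image_iff)
      then obtain v where v: "(?f has_vector_derivative v) (at (s - h) within ?J)"
        "v \<in> D c (\<gamma> (s - h))" "g c (\<gamma> (s - h)) v v < 0" "g c (\<gamma> (s - h)) (T c (\<gamma> (s - h))) v < 0"
        using N(2) unfolding good_def by blast
      then show ?thesis unfolding good_def using dv by blast
    qed
    ultimately show ?thesis unfolding ae_neg[OF Icc_sets] by blast
  qed
  show ?thesis using img ac int ae unfolding loc_def by blast
qed




lemma abs_cont_glue:
  fixes f :: "real \<Rightarrow> 'a::real_normed_vector"
  assumes A1: "abs_continuous_on {u..b} f" and A2: "abs_continuous_on {b..w} f"
    and ub: "u \<le> b" and bw: "b \<le> w"
  shows "abs_continuous_on {u..w} f"
proof (rule abs_contI)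
  fix e :: real assume e: "e > 0"
  obtain d1 where d1: "d1 > 0" and H1: "\<And>(n::nat) a c.
        (\<forall>i<n. a i \<le> c i \<and> {a i..c i} \<subseteq> {u..b}) \<Longrightarrow>
        (\<forall>i<n. \<forall>j<n. i \<noteq> j \<longrightarrow> c i \<le> a j \<or> c j \<le> a i) \<Longrightarrow>
        (\<Sum>i<n. c i - a i) < d1 \<Longrightarrow>
        (\<Sum>i<n. norm (f (c i) - f (a i))) < e/2"
    using abs_contD[OF A1 half_gt_zero[OF e]] by blast
  obtain d2 where d2: "d2 > 0" and H2: "\<And>(n::nat) a c.
        (\<forall>i<n. a i \<le> c i \<and> {a i..c i} \<subseteq> {b..w}) \<Longrightarrow>
        (\<forall>i<n. \<forall>j<n. i \<noteq> j \<longrightarrow> c i \<le> a j \<or> c j \<le> a i) \<Longrightarrow>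
        (\<Sum>i<n. c i - a i) < d2 \<Longrightarrow>
        (\<Sum>i<n. norm (f (c i) - f (a i))) < e/2"
    using abs_contD[OF A2 half_gt_zero[OF e]] by blast
  show "\<exists>d>0. \<forall>(n::nat) a c. (\<forall>i<n. a i \<le> c i \<and> {a i..c i} \<subseteq> {u..w}) \<longrightarrow>
        (\<forall>i<n. \<forall>j<n. i \<noteq> j \<longrightarrow> c i \<le> a j \<or> c j \<le> a i) \<longrightarrow>
        (\<Sum>i<n. c i - a i) < d \<longrightarrow>
        (\<Sum>i<n. norm (f (c i) - f (a i))) < e"
  proof (intro exI conjI allI impI)
    show "min d1 d2 > 0" using d1 d2 by simp
    fix n :: nat and a c :: "nat \<Rightarrow> real"
    assume h: "\<forall>i<n. a i \<le> c i \<and> {a i..c i} \<subseteq> {u..w}"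
      "\<forall>i<n. \<forall>j<n. i \<noteq> j \<longrightarrow> c i \<le> a j \<or> c j \<le> a i" "(\<Sum>i<n. c i - a i) < min d1 d2"
    have auw: "u \<le> a i" "c i \<le> w" "a i \<le> c i" if "i < n" for i
    proof -
      have "a i \<le> c i" "{a i..c i} \<subseteq> {u..w}" using h(1) that by auto
      then show "u \<le> a i" "c i \<le> w" "a i \<le> c i" by auto
    qed
    define a1 where "a1 i = min (a i) b" for i
    define c1 where "c1 i = min (c i) b" for i
    define a2 where "a2 i = max (a i) b" for i
    define c2 where "c2 i = max (c i) b" for i
    have len1: "(\<Sum>i<n. c1 i - a1 i) \<le> (\<Sum>i<n. c i - a i)"
    proof (rule sum_mono)
      fix i assume "i \<in> {..<n}"
      then have "a i \<le> c i" using auw by simp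
      then show "c1 i - a1 i \<le> c i - a i" by (auto simp: a1_def c1_def min_def)
    qed
    have len2: "(\<Sum>i<n. c2 i - a2 i) \<le> (\<Sum>i<n. c i - a i)"
    proof (rule sum_mono)
      fix i assume "i \<in> {..<n}"
      then have "a i \<le> c i" using auw by simp
      then show "c2 i - a2 i \<le> c i - a i" by (auto simp: a2_def c2_def max_def)
    qed
    have s1: "(\<Sum>i<n. norm (f (c1 i) - f (a1 i))) < e/2"
    proof (rule H1)
      show "\<forall>i<n. a1 i \<le> c1 i \<and> {a1 i..c1 i} \<subseteq> {u..b}"
      proof (intro allI impI)
        fix i assume "i < n"
        then have "a i \<le> c i" "u \<le> a i" "c i \<le> w" using auw by auto
        then show "a1 i \<le> c1 i \<and> {a1 i..c1 i} \<subseteq> {u..b}" using ub by (auto simp: a1_def c1_def min_def)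
      qed
      show "\<forall>i<n. \<forall>j<n. i \<noteq> j \<longrightarrow> c1 i \<le> a1 j \<or> c1 j \<le> a1 i"
      proof (intro allI impI)
        fix i j assume "i < n" "j < n" "i \<noteq> j"
        then have "c i \<le> a j \<or> c j \<le> a i" using h(2) by blast
        then show "c1 i \<le> a1 j \<or> c1 j \<le> a1 i" unfolding a1_def c1_def by (metis min.mono order_refl)
      qed
      show "(\<Sum>i<n. c1 i - a1 i) < d1" using len1 h(3) by simp
    qed
    have s2: "(\<Sum>i<n. norm (f (c2 i) - f (a2 i))) < e/2"
    proof (rule H2)
      show "\<forall>i<n. a2 i \<le> c2 i \<and> {a2 i..c2 i} \<subseteq> {b..w}"
      proof (intro allI impI)
        fix i assume "i < n"
        then have "a i \<le> c i" "u \<le> a i" "c i \<le> w" using auw by auto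
        then show "a2 i \<le> c2 i \<and> {a2 i..c2 i} \<subseteq> {b..w}" using bw by (auto simp: a2_def c2_def max_def)
      qed
      show "\<forall>i<n. \<forall>j<n. i \<noteq> j \<longrightarrow> c2 i \<le> a2 j \<or> c2 j \<le> a2 i"
      proof (intro allI impI)
        fix i j assume "i < n" "j < n" "i \<noteq> j"
        then have "c i \<le> a j \<or> c j \<le> a i" using h(2) by blast
        then show "c2 i \<le> a2 j \<or> c2 j \<le> a2 i" unfolding a2_def c2_def by (metis max.mono order_refl)
      qed
      show "(\<Sum>i<n. c2 i - a2 i) < d2" using len2 h(3) by simp
    qed
    have pt: "norm (f (c i) - f (a i)) \<le> norm (f (c1 i) - f (a1 i)) + norm (f (c2 i) - f (a2 i))"
      if "i < n" for i
    proof -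
      have ac: "a i \<le> c i" using auw that by simp
      consider "c i \<le> b" | "b \<le> a i" | "a i < b" "b < c i" by linarith
      then show ?thesis
      proof cases
        case 1 then show ?thesis using ac by (simp add: a1_def c1_def a2_def c2_def min_def max_def)
      next
        case 2 then show ?thesis using ac by (simp add: a1_def c1_def a2_def c2_def min_def max_def)
      next
        case 3
        then have "c1 i = b" "a1 i = a i" "a2 i = b" "c2 i = c i"
          by (auto simp: a1_def c1_def a2_def c2_def min_def max_def)
        then show ?thesis using norm_triangle_ineq[of "f (c i) - f b" "f b - f (a i)"]
          by (simp add: add.commute)
      qed
    qed
    have "(\<Sum>i<n. norm (f (c i) - f (a i))) \<le> (\<Sum>i<n. norm (f (c1 i) - f (a1 i)) + norm (f (c2 i) - f (a2 i)))"
      by (rule sum_mono) (use pt in auto)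
    also have "\<dots> = (\<Sum>i<n. norm (f (c1 i) - f (a1 i))) + (\<Sum>i<n. norm (f (c2 i) - f (a2 i)))"
      by (rule sum.distrib)
    also have "\<dots> < e" using s1 s2 by simp
    finally show "(\<Sum>i<n. norm (f (c i) - f (a i))) < e" .
  qed
qed

lemma at_left_part:
  fixes s :: real
  assumes "s < b" "b \<le> w"
  shows "at s within {u..w} = at s within {u..b}"
  by (rule at_within_nhd[where S="{..<b}"]) (use assms in auto)

lemma at_right_part:
  fixes s :: real
  assumes "b < s" "u \<le> b"
  shows "at s within {u..w} = at s within {b..w}"
  by (rule at_within_nhd[where S="{b<..}"]) (use assms in auto)

lemma loc_glue:
  assumes L1: "loc D g T c \<gamma> {u..b}" and L2: "loc D g T c \<gamma> {b..w}"
    and ub: "u \<le> b" and bw: "b \<le> w"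
  shows "loc D g T c \<gamma> {u..w}"
proof -
  let ?f = "snd c \<circ> \<gamma>"
  have img: "\<gamma> ` {u..w} \<subseteq> fst c"
  proof
    fix y assume "y \<in> \<gamma> ` {u..w}"
    then obtain s where s: "s \<in> {u..w}" "y = \<gamma> s" by blast
    show "y \<in> fst c"
    proof (cases "s \<le> b")
      case True then show ?thesis using s L1 unfolding loc_def by auto
    next
      case False then show ?thesis using s L2 unfolding loc_def by auto
    qed
  qed
  have ac: "abs_continuous_on {u..w} ?f"
    using abs_cont_glue[OF _ _ ub bw] L1 L2 unfolding loc_def by blast
  have vdL: "vector_derivative ?f (at s within {u..w}) = vector_derivative ?f (at s within {u..b})"
    if "s < b" for s using at_left_part[OF that bw] by simp
  have vdR: "vector_derivative ?f (at s within {u..w}) = vector_derivative ?f (at s within {b..w})"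
    if "b < s" for s using at_right_part[OF that ub] by simp
  have int: "(\<lambda>s. (norm (vector_derivative ?f (at s within {u..w})))\<^sup>2) integrable_on {u..w}"
  proof (rule Henstock_Kurzweil_Integration.integrable_combine[OF ub bw])
    show "(\<lambda>s. (norm (vector_derivative ?f (at s within {u..w})))\<^sup>2) integrable_on {u..b}"
    proof (rule integrable_spike[OF _ negligible_sing[of b]])
      show "(\<lambda>s. (norm (vector_derivative ?f (at s within {u..b})))\<^sup>2) integrable_on {u..b}"
        using L1 unfolding loc_def by blast
    qed (use vdL in auto)
    show "(\<lambda>s. (norm (vector_derivative ?f (at s within {u..w})))\<^sup>2) integrable_on {b..w}"
    proof (rule integrable_spike[OF _ negligible_sing[of b]])
      show "(\<lambda>s. (norm (vector_derivative ?f (at s within {b..w})))\<^sup>2) integrable_on {b..w}"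
        using L2 unfolding loc_def by blast
    qed (use vdR in auto)
  qed
  have ae: "AE s in lebesgue_on {u..w}. good D g T c \<gamma> {u..w} s"
  proof -
    obtain N1 where N1: "negligible N1" "\<And>s. s \<in> {u..b} - N1 \<Longrightarrow> good D g T c \<gamma> {u..b} s"
      using L1 unfolding loc_def ae_neg[OF Icc_sets] by blast
    obtain N2 where N2: "negligible N2" "\<And>s. s \<in> {b..w} - N2 \<Longrightarrow> good D g T c \<gamma> {b..w} s"
      using L2 unfolding loc_def ae_neg[OF Icc_sets] by blast
    have "negligible (N1 \<union> N2 \<union> {b})" using N1(1) N2(1) by simp
    moreover have "good D g T c \<gamma> {u..w} s" if s: "s \<in> {u..w} - (N1 \<union> N2 \<union> {b})" for s
    proof (cases "s < b")
      case True
      then have "good D g T c \<gamma> {u..b} s" using N1(2) s by auto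
      then show ?thesis unfolding good_def at_left_part[OF True bw] .
    next
      case False
      then have "b < s" using s by auto
      then have "good D g T c \<gamma> {b..w} s" using N2(2) s by auto
      then show ?thesis unfolding good_def at_right_part[OF \<open>b < s\<close> ub] .
    qed
    ultimately show ?thesis unfolding ae_neg[OF Icc_sets] by blast
  qed
  show ?thesis using img ac int ae unfolding loc_def by blast
qed




lemma vd_quotient:
  fixes f :: "real \<Rightarrow> 'a::real_normed_vector"
  assumes "(f has_vector_derivative D) (at x within S)"
  shows "((\<lambda>y. (1 / (y - x)) *\<^sub>R (f y - f x)) \<longlongrightarrow> D) (at x within S)"
proof -
  have "((\<lambda>y. norm ((f y - f x) - (y - x) *\<^sub>R D) / norm (y - x)) \<longlongrightarrow> 0) (at x within S)"
    using assms unfolding has_vector_derivative_def has_derivative_iff_norm by simp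
  moreover have "eventually (\<lambda>y. norm ((f y - f x) - (y - x) *\<^sub>R D) / norm (y - x) =
      norm ((1 / (y - x)) *\<^sub>R (f y - f x) - D)) (at x within S)"
    unfolding eventually_at_filter
  proof (rule always_eventually, intro allI impI)
    fix y assume "y \<noteq> x"
    then have ne: "y - x \<noteq> 0" by simp
    have "(1 / (y - x)) *\<^sub>R (f y - f x) - D = (1 / (y - x)) *\<^sub>R ((f y - f x) - (y - x) *\<^sub>R D)"
      using ne by (simp add: scaleR_diff_right)
    then show "norm ((f y - f x) - (y - x) *\<^sub>R D) / norm (y - x) = norm ((1 / (y - x)) *\<^sub>R (f y - f x) - D)"
      by (simp add: divide_inverse mult.commute)
  qed
  ultimately have "((\<lambda>y. norm ((1 / (y - x)) *\<^sub>R (f y - f x) - D)) \<longlongrightarrow> 0) (at x within S)"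
    by (rule Lim_transform_eventually)
  then show ?thesis unfolding tendsto_norm_zero_iff LIM_zero_iff .
qed

lemma small_eventually:
  assumes d: "(0::real) < d"
  shows "\<exists>n0. \<forall>n\<ge>n0. 1 / real (Suc n) < d"
proof -
  obtain n0 :: nat where n0: "1 / d < real n0" using reals_Archimedean2 by blast
  have "1 / real (Suc n) < d" if "n \<ge> n0" for n
  proof -
    have "real n0 \<le> real n" using that by simp
    then have x: "1 / d < real (Suc n)" using n0 by simp
    have "0 < real (Suc n)" by simp
    then show ?thesis using x d by (simp add: field_simps)
  qed
  then show ?thesis by blast
qed

lemma deriv_meas:
  fixes F :: "real \<Rightarrow> 'e::euclidean_space"
  assumes pq: "p < q" and cont: "continuous_on {p..q} F" and N: "negligible N"
    and der: "\<And>s. s \<in> {p..q} - N \<Longrightarrow> \<exists>v. (F has_vector_derivative v) (at s within {p..q})"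
  shows "(\<lambda>s. vector_derivative F (at s within {p..q})) measurable_on {p..q}"
proof -
  define Q where "Q n s = real (Suc n) *\<^sub>R (F (min (s + 1 / real (Suc n)) q) - F s)" for n s
  have Qm: "Q n measurable_on {p..q}" for n
  proof -
    have "continuous_on {p..q} (\<lambda>s. min (s + 1 / real (Suc n)) q)"
      by (intro continuous_intros)
    moreover have "(\<lambda>s. min (s + 1 / real (Suc n)) q) ` {p..q} \<subseteq> {p..q}"
    proof -
      have pos: "0 \<le> 1 / real (Suc n)" by simp
      show ?thesis using pos by (auto simp: min_def intro!: add_increasing2)
    qed
    ultimately have "continuous_on {p..q} (\<lambda>s. F (min (s + 1 / real (Suc n)) q))"
      using continuous_on_compose2[OF cont] by blast
    then have "continuous_on {p..q} (Q n)" unfolding Q_def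
      by (intro continuous_intros cont)
    then have "Q n \<in> borel_measurable (lebesgue_on {p..q})"
      by (rule continuous_imp_measurable_on_sets_lebesgue) simp
    then show ?thesis by (simp add: measurable_on_iff_borel_measurable)
  qed
  show ?thesis
  proof (rule measurable_on_limit[OF Qm, of "N \<union> {q}"])
    show "negligible (N \<union> {q})" using N by simp
    fix s assume s: "s \<in> {p..q} - (N \<union> {q})"
    then have sq: "s < q" and sp: "p \<le> s" by auto
    obtain v where v: "(F has_vector_derivative v) (at s within {p..q})" using der s by blast
    have vd: "vector_derivative F (at s within {p..q}) = v"
      by (rule vector_derivative_within[OF not_bot_Icc[OF pq _ order_refl] v]) (use s in auto)
    have lim1: "((\<lambda>y. (1 / (y - s)) *\<^sub>R (F y - F s)) \<longlongrightarrow> v) (at s within {p..q})"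
      by (rule vd_quotient[OF v])
    have seq: "filterlim (\<lambda>n. s + 1 / real (Suc n)) (at s within {p..q}) sequentially"
      unfolding filterlim_at
    proof
      have ev: "eventually (\<lambda>n. 1 / real (Suc n) < q - s) sequentially"
      proof -
        obtain n0 where "\<forall>n\<ge>n0. 1 / real (Suc n) < q - s" using small_eventually[of "q - s"] sq by auto
        then show ?thesis unfolding eventually_sequentially by blast
      qed
      show "eventually (\<lambda>n. s + 1 / real (Suc n) \<in> {p..q} \<and> s + 1 / real (Suc n) \<noteq> s) sequentially"
        using ev by eventually_elim (use sp in \<open>auto intro!: add_increasing2\<close>)
      have "((\<lambda>n. 1 / real (Suc n)) \<longlongrightarrow> 0) sequentially"
        by (rule LIMSEQ_Suc[OF lim_const_over_n]) 
      then show "((\<lambda>n. s + 1 / real (Suc n)) \<longlongrightarrow> s) sequentially"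
        using tendsto_add[OF tendsto_const[of s]] by fastforce
    qed
    have lim2: "((\<lambda>n. (1 / ((s + 1 / real (Suc n)) - s)) *\<^sub>R (F (s + 1 / real (Suc n)) - F s)) \<longlongrightarrow> v) sequentially"
      using filterlim_compose[OF lim1 seq] by (simp add: o_def)
    have ev2: "eventually (\<lambda>n. (1 / ((s + 1 / real (Suc n)) - s)) *\<^sub>R (F (s + 1 / real (Suc n)) - F s) = Q n s) sequentially"
    proof -
      obtain n0 where "\<forall>n\<ge>n0. 1 / real (Suc n) < q - s" using small_eventually[of "q - s"] sq by auto
      then show ?thesis unfolding eventually_sequentially Q_def
        by (intro exI[of _ n0] allI impI) (auto simp: min_def)
    qed
    show "(\<lambda>n. Q n s) \<longlonglongrightarrow> vector_derivative F (at s within {p..q})"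
      unfolding vd using Lim_transform_eventually[OF lim2 ev2] .
  qed
qed




lemma lin_bound:
  fixes L :: "'e::euclidean_space \<Rightarrow> 'f::real_normed_vector"
  assumes "linear L" "\<And>i. i \<in> Basis \<Longrightarrow> norm (L i) \<le> B i"
  shows "norm (L w) \<le> (\<Sum>i\<in>Basis. \<bar>B i\<bar>) * norm w"
proof -
  have "L w = L (\<Sum>i\<in>Basis. (w \<bullet> i) *\<^sub>R i)" by (simp add: euclidean_representation)
  also have "\<dots> = (\<Sum>i\<in>Basis. (w \<bullet> i) *\<^sub>R L i)"
    using assms(1) by (simp add: linear_sum linear_cmul o_def)
  finally have "norm (L w) \<le> (\<Sum>i\<in>Basis. norm ((w \<bullet> i) *\<^sub>R L i))"
    using norm_sum by metis
  also have "\<dots> \<le> (\<Sum>i\<in>Basis. norm w * \<bar>B i\<bar>)"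
  proof (rule sum_mono)
    fix i :: 'e assume i: "i \<in> Basis"
    have "norm ((w \<bullet> i) *\<^sub>R L i) = \<bar>w \<bullet> i\<bar> * norm (L i)" by simp
    also have "\<dots> \<le> norm w * \<bar>B i\<bar>"
      by (rule mult_mono) (use Basis_le_norm[OF i, of w] assms(2)[OF i] in auto)
    finally show "norm ((w \<bullet> i) *\<^sub>R L i) \<le> norm w * \<bar>B i\<bar>" .
  qed
  also have "\<dots> = (\<Sum>i\<in>Basis. \<bar>B i\<bar>) * norm w" by (simp add: sum_distrib_left mult.commute)
  finally show ?thesis .
qed

lemma deriv_bounds:
  fixes h :: "'e::euclidean_space \<Rightarrow> 'f::real_normed_vector"
  assumes W: "open W" and K: "compact K" "K \<subseteq> W"
    and diff: "\<And>x. x \<in> W \<Longrightarrow> h differentiable (at x)"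
    and cont: "\<And>w. continuous_on W (\<lambda>x. frechet_derivative h (at x) w)"
  obtains r M where "r > 0" "M \<ge> 0"
    "\<And>x w. x \<in> K \<Longrightarrow> norm (frechet_derivative h (at x) w) \<le> M * norm w"
    "\<And>x y. x \<in> K \<Longrightarrow> norm (y - x) \<le> r \<Longrightarrow> norm (h y - h x) \<le> M * norm (y - x)"
proof -
  obtain r where r: "r > 0" "(\<Union>x\<in>K. cball x r) \<subseteq> W"
    using compact_subset_open_imp_cball_epsilon_subset[OF K(1) W K(2)] by blast
  define K2 where "K2 = {x + y | x y. x \<in> K \<and> y \<in> cball 0 r}"
  have cK2: "compact K2" unfolding K2_def by (rule compact_sums[OF K(1) compact_cball])
  have cb: "cball x r \<subseteq> K2" if "x \<in> K" for x
  proof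
    fix z assume "z \<in> cball x r"
    then have "z = x + (z - x)" "z - x \<in> cball 0 r" by (auto simp: dist_norm norm_minus_commute)
    then show "z \<in> K2" unfolding K2_def using that by blast
  qed
  have K2W: "K2 \<subseteq> W"
  proof
    fix z assume "z \<in> K2"
    then obtain x y where "z = x + y" "x \<in> K" "y \<in> cball 0 r" unfolding K2_def by blast
    then have "z \<in> cball x r" by (simp add: dist_norm)
    then show "z \<in> W" using r(2) \<open>x \<in> K\<close> by blast
  qed
  have "\<exists>B. \<forall>x\<in>K2. norm (frechet_derivative h (at x) i) \<le> B" for i
  proof -
    have "continuous_on K2 (\<lambda>x. frechet_derivative h (at x) i)"
      using cont continuous_on_subset K2W by blast
    then have "compact ((\<lambda>x. frechet_derivative h (at x) i) ` K2)"
      using compact_continuous_image cK2 by blast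
    then have "bounded ((\<lambda>x. frechet_derivative h (at x) i) ` K2)" by (rule compact_imp_bounded)
    then show ?thesis unfolding bounded_iff by blast
  qed
  then obtain B where B: "\<And>i x. x \<in> K2 \<Longrightarrow> norm (frechet_derivative h (at x) i) \<le> B i" by metis
  define M where "M = (\<Sum>i\<in>Basis. \<bar>B i\<bar>)"
  have M0: "M \<ge> 0" unfolding M_def by (simp add: sum_nonneg)
  have bnd: "norm (frechet_derivative h (at x) w) \<le> M * norm w" if "x \<in> K2" for x w
  proof -
    have "linear (frechet_derivative h (at x))"
      using linear_frechet_derivative diff K2W that by blast
    then show ?thesis unfolding M_def by (rule lin_bound) (use B that in auto)
  qed
  show ?thesis
  proof (rule that[OF r(1) M0])
    fix x w assume "x \<in> K"
    then have "x \<in> cball x r" "cball x r \<subseteq> K2" using cb r(1) by auto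
    then have "x \<in> K2" by blast
    then show "norm (frechet_derivative h (at x) w) \<le> M * norm w" by (rule bnd)
  next
    fix x y assume x: "x \<in> K" and y: "norm (y - x) \<le> r"
    have "norm (h y - h x) \<le> M * norm (y - x)"
    proof (rule differentiable_bound[of "cball x r" h "\<lambda>z. frechet_derivative h (at z)"])
      show "convex (cball x r)" by simp
      fix z assume z: "z \<in> cball x r"
      then have zK2: "z \<in> K2" using cb x by blast
      then have "h differentiable (at z)" using diff K2W by blast
      then show "(h has_derivative frechet_derivative h (at z)) (at z within cball x r)"
        using frechet_derivative_works has_derivative_at_withinI by blast
      show "onorm (frechet_derivative h (at z)) \<le> M"
        by (rule onorm_le) (use bnd zK2 in simp)
    next
      show "y \<in> cball x r" using y by (simp add: dist_norm norm_minus_commute)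
      show "x \<in> cball x r" using r(1) by simp
    qed
    then show "norm (h y - h x) \<le> M * norm (y - x)" .
  qed
qed




lemma loc_chart:
  fixes A :: "('m::{t2_space, second_countable_topology}, 'e::euclidean_space) chart set"
  assumes sst: "sub_space_time A D k g T" and cA: "c \<in> A" "c' \<in> A" and pq: "p < q"
    and L: "loc D g T c \<gamma> {p..q}" and sub: "\<gamma> ` {p..q} \<subseteq> fst c'"
  shows "loc D g T c' \<gamma> {p..q}"
proof -
  let ?J = "{p..q}"
  let ?f = "snd c \<circ> \<gamma>" and ?f' = "snd c' \<circ> \<gamma>"
  let ?h = "transition c c'"
  let ?W = "snd c ` (fst c \<inter> fst c')"
  let ?Dh = "\<lambda>x. frechet_derivative ?h (at x)"
  have atlas: "smooth_atlas A" and SD: "smooth_distribution A D k" and SM: "smooth_metric A D g"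
    and TO: "time_orientation A D g T"
    using sst unfolding sub_space_time_def by auto
  have inj: "inj_on (snd c) (fst c)" using atlas cA unfolding smooth_atlas_def by blast
  have sm: "smooth_on ?W ?h" using atlas cA unfolding smooth_atlas_def by blast
  then have Wopen: "open ?W" and C1: "Ck_on (Suc 0) ?W ?h" unfolding smooth_on_def by blast+
  have diff: "\<And>x. x \<in> ?W \<Longrightarrow> ?h differentiable (at x)" using C1 by auto
  have contD: "\<And>w. continuous_on ?W (\<lambda>x. ?Dh x w)" using C1 by simp
  have Lc: "\<gamma> ` ?J \<subseteq> fst c" "abs_continuous_on ?J ?f"
    "(\<lambda>s. (norm (vector_derivative ?f (at s within ?J)))\<^sup>2) integrable_on ?J"
    "AE s in lebesgue_on ?J. good D g T c \<gamma> ?J s" using L unfolding loc_def by blast+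
  have fW: "?f s \<in> ?W" if "s \<in> ?J" for s
  proof -
    have "\<gamma> s \<in> fst c \<inter> fst c'" using Lc(1) sub that by auto
    then show ?thesis by simp
  qed
  have hf: "?h (?f s) = ?f' s" if "s \<in> ?J" for s
  proof -
    have "\<gamma> s \<in> fst c" using Lc(1) that by auto
    then show ?thesis unfolding transition_def chart_inv_def using inv_into_f_f[OF inj] by simp
  qed
  have contf: "continuous_on ?J ?f" using abs_cont_cont[OF Lc(2)] by (simp add: is_interval_cc)
  define K where "K = ?f ` ?J"
  have Kc: "compact K" unfolding K_def using compact_continuous_image[OF contf] by simp
  have KW: "K \<subseteq> ?W" unfolding K_def using fW by blast
  have "\<exists>r M. r > 0 \<and> M \<ge> 0 \<and>
    (\<forall>x w. x \<in> K \<longrightarrow> norm (?Dh x w) \<le> M * norm w) \<and>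
    (\<forall>x y. x \<in> K \<longrightarrow> norm (y - x) \<le> r \<longrightarrow> norm (?h y - ?h x) \<le> M * norm (y - x))"
  proof (rule deriv_bounds[OF Wopen Kc KW diff contD])
    fix r M assume a: "r > 0" "M \<ge> 0"
      "\<And>x w. x \<in> K \<Longrightarrow> norm (?Dh x w) \<le> M * norm w"
      "\<And>x y. x \<in> K \<Longrightarrow> norm (y - x) \<le> r \<Longrightarrow> norm (?h y - ?h x) \<le> M * norm (y - x)"
    show "\<exists>r M. r > 0 \<and> M \<ge> 0 \<and>
      (\<forall>x w. x \<in> K \<longrightarrow> norm (?Dh x w) \<le> M * norm w) \<and>
      (\<forall>x y. x \<in> K \<longrightarrow> norm (y - x) \<le> r \<longrightarrow> norm (?h y - ?h x) \<le> M * norm (y - x))"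
      by (intro exI[of _ r] exI[of _ M] conjI allI impI a) auto
  qed
  then obtain r M where rM0: "r > 0" "M \<ge> 0"
    "\<forall>x w. x \<in> K \<longrightarrow> norm (?Dh x w) \<le> M * norm w"
    "\<forall>x y. x \<in> K \<longrightarrow> norm (y - x) \<le> r \<longrightarrow> norm (?h y - ?h x) \<le> M * norm (y - x)"
    by blast
  note rM = rM0(1,2) rM0(3)[rule_format] rM0(4)[rule_format]
  have contf': "continuous_on ?J ?f'"
  proof -
    have "?h differentiable_on ?W"
      by (rule differentiable_at_imp_differentiable_on) (use diff in blast)
    then have hc: "continuous_on ?W ?h" by (rule differentiable_imp_continuous_on)
    have "continuous_on (?f ` ?J) ?h" by (rule continuous_on_subset[OF hc]) (use KW K_def in blast)
    then have "continuous_on ?J (?h \<circ> ?f)" by (rule continuous_on_compose[OF contf])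
    then show ?thesis by (rule continuous_on_eq) (use hf in simp)
  qed
  have ac: "abs_continuous_on ?J ?f'"
  proof (rule abs_contI)
    fix e :: real assume e: "e > 0"
    obtain d1 where d1: "d1 > 0" and H1: "\<And>(n::nat) a b.
          (\<forall>i<n. a i \<le> b i \<and> {a i..b i} \<subseteq> ?J) \<Longrightarrow>
          (\<forall>i<n. \<forall>j<n. i \<noteq> j \<longrightarrow> b i \<le> a j \<or> b j \<le> a i) \<Longrightarrow>
          (\<Sum>i<n. b i - a i) < d1 \<Longrightarrow>
          (\<Sum>i<n. norm (?f (b i) - ?f (a i))) < r"
      using abs_contD[OF Lc(2) rM(1)] by blast
    have eM: "e / (M + 1) > 0" using e rM(2) by simp
    obtain d2 where d2: "d2 > 0" and H2: "\<And>(n::nat) a b.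
          (\<forall>i<n. a i \<le> b i \<and> {a i..b i} \<subseteq> ?J) \<Longrightarrow>
          (\<forall>i<n. \<forall>j<n. i \<noteq> j \<longrightarrow> b i \<le> a j \<or> b j \<le> a i) \<Longrightarrow>
          (\<Sum>i<n. b i - a i) < d2 \<Longrightarrow>
          (\<Sum>i<n. norm (?f (b i) - ?f (a i))) < e / (M + 1)"
      using abs_contD[OF Lc(2) eM] by blast
    show "\<exists>d>0. \<forall>(n::nat) a b. (\<forall>i<n. a i \<le> b i \<and> {a i..b i} \<subseteq> ?J) \<longrightarrow>
          (\<forall>i<n. \<forall>j<n. i \<noteq> j \<longrightarrow> b i \<le> a j \<or> b j \<le> a i) \<longrightarrow>
          (\<Sum>i<n. b i - a i) < d \<longrightarrow>
          (\<Sum>i<n. norm (?f' (b i) - ?f' (a i))) < e"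
    proof (intro exI conjI allI impI)
      show "min d1 d2 > 0" using d1 d2 by simp
      fix n :: nat and a b :: "nat \<Rightarrow> real"
      assume h: "\<forall>i<n. a i \<le> b i \<and> {a i..b i} \<subseteq> ?J"
        "\<forall>i<n. \<forall>j<n. i \<noteq> j \<longrightarrow> b i \<le> a j \<or> b j \<le> a i" "(\<Sum>i<n. b i - a i) < min d1 d2"
      have each: "norm (?f' (b i) - ?f' (a i)) \<le> M * norm (?f (b i) - ?f (a i))" if i: "i < n" for i
      proof -
        have ab: "a i \<le> b i" "{a i..b i} \<subseteq> ?J" using h(1) i by auto
        then have abJ: "a i \<in> ?J" "b i \<in> ?J" by auto
        have "b i - a i \<le> (\<Sum>i<n. b i - a i)"
          by (rule member_le_sum) (use h(1) i in auto)
        then have len: "(\<Sum>j<Suc 0. (\<lambda>_. b i) j - (\<lambda>_. a i) j) < d1" using h(3) by simp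
        have "(\<Sum>j<Suc 0. norm (?f ((\<lambda>_. b i) j) - ?f ((\<lambda>_. a i) j))) < r"
          by (rule H1[OF _ _ len]) (use ab in auto)
        then have small: "norm (?f (b i) - ?f (a i)) \<le> r" by simp
        have "?f (a i) \<in> K" using abJ unfolding K_def by blast
        from rM(4)[OF this small] show ?thesis using hf abJ by simp
      qed
      have "(\<Sum>i<n. norm (?f' (b i) - ?f' (a i))) \<le> (\<Sum>i<n. M * norm (?f (b i) - ?f (a i)))"
        by (rule sum_mono) (use each in auto)
      also have "\<dots> = M * (\<Sum>i<n. norm (?f (b i) - ?f (a i)))" by (simp add: sum_distrib_left)
      also have "\<dots> \<le> M * (e / (M + 1))"
      proof (rule mult_left_mono)
        show "(\<Sum>i<n. norm (?f (b i) - ?f (a i))) \<le> e / (M + 1)"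
          using H2[OF h(1) h(2)] h(3) by fastforce
      qed (rule rM(2))
      also have "\<dots> < e" using e rM(2) by (simp add: field_simps)
      finally show "(\<Sum>i<n. norm (?f' (b i) - ?f' (a i))) < e" .
    qed
  qed
  have dd: "(?f' has_vector_derivative ?Dh (?f s) v) (at s within ?J)"
    if s: "s \<in> ?J" and v: "(?f has_vector_derivative v) (at s within ?J)" for s v
  proof -
    have "(?h has_derivative ?Dh (?f s)) (at (?f s))"
      using diff[OF fW[OF s]] frechet_derivative_works by blast
    then have "(?h has_derivative ?Dh (?f s)) (at (?f s) within ?f ` ?J)"
      by (rule has_derivative_at_withinI)
    from vector_derivative_diff_chain_within[OF v this]
    have "((?h \<circ> ?f) has_vector_derivative ?Dh (?f s) v) (at s within ?J)" .
    then show ?thesis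
      by (rule has_vector_derivative_transform[OF s, rotated]) (use hf in simp)
  qed
  have cc: "chart_change c c' (\<gamma> s) = ?Dh (?f s)" for s
    unfolding chart_change_def by simp
  obtain N where N: "negligible N" "\<And>s. s \<in> ?J - N \<Longrightarrow> good D g T c \<gamma> ?J s"
    using Lc(4) unfolding ae_neg[OF Icc_sets] by blast
  have goodv: "\<exists>v. (?f has_vector_derivative v) (at s within ?J) \<and>
        (?f' has_vector_derivative ?Dh (?f s) v) (at s within ?J) \<and>
        vector_derivative ?f (at s within ?J) = v \<and>
        vector_derivative ?f' (at s within ?J) = ?Dh (?f s) v \<and>
        good D g T c' \<gamma> ?J s"
    if s: "s \<in> ?J - N" for s
  proof -
    obtain v where v: "(?f has_vector_derivative v) (at s within ?J)"
        "v \<in> D c (\<gamma> s)" "g c (\<gamma> s) v v < 0" "g c (\<gamma> s) (T c (\<gamma> s)) v < 0"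
      using N(2)[OF s] unfolding good_def by blast
    have sJ: "s \<in> ?J" using s by simp
    have v': "(?f' has_vector_derivative ?Dh (?f s) v) (at s within ?J)" by (rule dd[OF sJ v(1)])
    have nb: "at s within ?J \<noteq> bot" by (rule not_bot_Icc[OF pq sJ order_refl])
    have p: "\<gamma> s \<in> fst c \<inter> fst c'" using Lc(1) sub sJ by auto
    have Dc': "D c' (\<gamma> s) = chart_change c c' (\<gamma> s) ` D c (\<gamma> s)"
      using SD cA p unfolding smooth_distribution_def by blast
    have gc': "g c' (\<gamma> s) (chart_change c c' (\<gamma> s) u) (chart_change c c' (\<gamma> s) w) = g c (\<gamma> s) u w"
      if "u \<in> D c (\<gamma> s)" "w \<in> D c (\<gamma> s)" for u w
      using SM cA p that unfolding smooth_metric_def by blast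
    have Tc': "T c' (\<gamma> s) = chart_change c c' (\<gamma> s) (T c (\<gamma> s))" and TD: "T c (\<gamma> s) \<in> D c (\<gamma> s)"
      using TO cA p unfolding time_orientation_def by blast+
    have "good D g T c' \<gamma> ?J s"
      unfolding good_def
    proof (intro exI conjI)
      show "(?f' has_vector_derivative ?Dh (?f s) v) (at s within ?J)" by (rule v')
      show "?Dh (?f s) v \<in> D c' (\<gamma> s)" using Dc' v(2) cc by simp
      show "g c' (\<gamma> s) (?Dh (?f s) v) (?Dh (?f s) v) < 0"
        using gc'[OF v(2) v(2)] v(3) cc by simp
      show "g c' (\<gamma> s) (T c' (\<gamma> s)) (?Dh (?f s) v) < 0"
        using gc'[OF TD v(2)] v(4) cc Tc' by simp
    qed
    then show ?thesis
      using v(1) v' vector_derivative_within[OF nb v(1)] vector_derivative_within[OF nb v'] by blast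
  qed
  have ae: "AE s in lebesgue_on ?J. good D g T c' \<gamma> ?J s"
    unfolding ae_neg[OF Icc_sets] using N(1) goodv by blast
  have int: "(\<lambda>s. (norm (vector_derivative ?f' (at s within ?J)))\<^sup>2) integrable_on ?J"
  proof -
    let ?G = "\<lambda>s. (norm (vector_derivative ?f' (at s within ?J)))\<^sup>2"
    let ?F = "\<lambda>s. (norm (vector_derivative ?f (at s within ?J)))\<^sup>2"
    have Vm: "(\<lambda>s. vector_derivative ?f' (at s within ?J)) measurable_on ?J"
      by (rule deriv_meas[OF pq contf' N(1)]) (use goodv in blast)
    then have "(\<lambda>s. vector_derivative ?f' (at s within ?J)) \<in> borel_measurable (lebesgue_on ?J)"
      by (simp add: measurable_on_iff_borel_measurable)
    then have "?G \<in> borel_measurable (lebesgue_on ?J)" by measurable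
    then have Gm: "?G measurable_on ?J" by (simp add: measurable_on_iff_borel_measurable)
    define G0 where "G0 s = (if s \<in> N then 0 else ?G s)" for s
    have G0m: "G0 measurable_on ?J"
      by (rule measurable_on_spike[OF Gm N(1)]) (simp add: G0_def)
    then have G0b: "G0 \<in> borel_measurable (lebesgue_on ?J)"
      by (simp add: measurable_on_iff_borel_measurable)
    have Fint: "(\<lambda>s. M\<^sup>2 * ?F s) integrable_on ?J" using integrable_on_cmult_left[OF Lc(3)] by simp
    have bnd: "norm (G0 s) \<le> M\<^sup>2 * ?F s" if s: "s \<in> ?J" for s
    proof (cases "s \<in> N")
      case True then show ?thesis by (simp add: G0_def)
    next
      case False
      then obtain v where v: "vector_derivative ?f (at s within ?J) = v"
          "vector_derivative ?f' (at s within ?J) = ?Dh (?f s) v"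
        using goodv s by blast
      have fK: "?f s \<in> K" using s unfolding K_def by blast
      have "norm (?Dh (?f s) v) \<le> M * norm v" by (rule rM(3)[OF fK])
      then have "(norm (?Dh (?f s) v))\<^sup>2 \<le> (M * norm v)\<^sup>2"
        by (rule power_mono) simp
      then show ?thesis using False v by (simp add: G0_def power_mult_distrib)
    qed
    have "G0 integrable_on ?J"
      by (rule measurable_bounded_by_integrable_imp_integrable[OF G0b Fint bnd]) (auto intro: Icc_sets)
    then show ?thesis
      by (rule integrable_spike[OF _ N(1)]) (simp add: G0_def)
  qed
  have img: "\<gamma> ` ?J \<subseteq> fst c'" by (rule sub)
  show ?thesis using img ac int ae unfolding loc_def by blast
qed




lemma Icc_cball: "{u..v} \<inter> cball t e = {max u (t - e)..min v (t + e::real)}"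
  by (auto simp: dist_real_def abs_le_iff)

lemma restr_tfd:
  assumes tfd: "tfd_curve A D g T I \<gamma>" and uv: "u \<in> I" "v \<in> I"
  shows "tfd_curve A D g T {u..v} \<gamma>"
  unfolding tfd_curve_iff
proof (intro conjI ballI)
  show "is_interval {u..v}" by (simp add: is_interval_cc)
  fix t assume t: "t \<in> {u..v}"
  have intI: "is_interval I" using tfd unfolding tfd_curve_iff by blast
  have uvI: "{u..v} \<subseteq> I"
  proof
    fix x assume "x \<in> {u..v}"
    then have "u \<le> x" "x \<le> v" by auto
    then show "x \<in> I" using intI uv unfolding is_interval_1 by blast
  qed
  then have tI: "t \<in> I" using t by blast
  obtain c e where c: "c \<in> A" "e > 0" "loc D g T c \<gamma> (I \<inter> cball t e)"
    using tfd tI unfolding tfd_curve_iff by blast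
  have "{max u (t - e)..min v (t + e)} \<subseteq> I \<inter> cball t e"
    using uvI Icc_cball[of u v t e] by blast
  then have "loc D g T c \<gamma> {max u (t - e)..min v (t + e)}"
    by (rule loc_mono[OF c(3) interval_cball_sets[OF intI]])
  then have "loc D g T c \<gamma> ({u..v} \<inter> cball t e)" by (simp only: Icc_cball)
  then show "\<exists>c\<in>A. \<exists>\<epsilon>>0. loc D g T c \<gamma> ({u..v} \<inter> cball t \<epsilon>)"
    using c(1,2) by blast
qed

lemma restr_chron:
  assumes "tfd_curve A D g T I \<gamma>" "u < v" "u \<in> I" "v \<in> I"
  shows "chron_rel A D g T (\<gamma> u) (\<gamma> v)"
  unfolding chron_rel_def using restr_tfd[OF assms(1,3,4)] assms(2) by blast

lemma shift_tfd:
  assumes tfd: "tfd_curve A D g T {a..b} \<gamma>"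
  shows "tfd_curve A D g T {a+h..b+h} (\<lambda>s. \<gamma> (s - h))"
  unfolding tfd_curve_iff
proof (intro conjI ballI)
  show "is_interval {a+h..b+h}" by (simp add: is_interval_cc)
  fix t' assume t': "t' \<in> {a+h..b+h}"
  then have t: "t' - h \<in> {a..b}" by auto
  obtain c e where c: "c \<in> A" "e > 0" "loc D g T c \<gamma> ({a..b} \<inter> cball (t' - h) e)"
    using tfd t unfolding tfd_curve_iff by blast
  have "loc D g T c \<gamma> {max a (t' - h - e)..min b (t' - h + e)}"
    using c(3) Icc_cball[of a b "t' - h" e] by simp
  from loc_shift[OF this, of h]
  have "loc D g T c (\<lambda>s. \<gamma> (s - h)) {max a (t' - h - e) + h..min b (t' - h + e) + h}" .
  moreover have "{max a (t' - h - e) + h..min b (t' - h + e) + h} = {a+h..b+h} \<inter> cball t' e"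
  proof -
    have "max a (t' - h - e) + h = max (a+h) (t' - e)" by (auto simp: max_def)
    moreover have "min b (t' - h + e) + h = min (b+h) (t' + e)" by (auto simp: min_def)
    ultimately show ?thesis by (simp only: Icc_cball)
  qed
  ultimately have "loc D g T c (\<lambda>s. \<gamma> (s - h)) ({a+h..b+h} \<inter> cball t' e)" by simp
  then show "\<exists>c\<in>A. \<exists>\<epsilon>>0. loc D g T c (\<lambda>s. \<gamma> (s - h)) ({a+h..b+h} \<inter> cball t' \<epsilon>)"
    using c(1,2) by blast
qed




lemma loc_cont:
  assumes atlas: "smooth_atlas A" and cA: "c \<in> A" and L: "loc D g T c \<gamma> J" and J: "is_interval J"
  shows "continuous_on J \<gamma>"
proof -
  have inj: "inj_on (snd c) (fst c)" and ci: "continuous_on (snd c ` fst c) (chart_inv c)"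
    using atlas cA unfolding smooth_atlas_def by blast+
  have img: "\<gamma> ` J \<subseteq> fst c" and ac: "abs_continuous_on J (snd c \<circ> \<gamma>)" using L unfolding loc_def by blast+
  have cf: "continuous_on J (snd c \<circ> \<gamma>)" by (rule abs_cont_cont[OF ac J])
  have "continuous_on ((snd c \<circ> \<gamma>) ` J) (chart_inv c)"
    by (rule continuous_on_subset[OF ci]) (use img in auto)
  then have "continuous_on J (chart_inv c \<circ> (snd c \<circ> \<gamma>))" by (rule continuous_on_compose[OF cf])
  then show ?thesis
  proof (rule continuous_on_eq)
    fix s assume "s \<in> J"
    then have "\<gamma> s \<in> fst c" using img by auto
    then show "(chart_inv c \<circ> (snd c \<circ> \<gamma>)) s = \<gamma> s"
      unfolding chart_inv_def using inv_into_f_f[OF inj] by simp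
  qed
qed

lemma tfd_concat:
  fixes A :: "('m::{t2_space, second_countable_topology}, 'e::euclidean_space) chart set"
  assumes sst: "sub_space_time A D k g T" and ab: "a < b" and bd: "b < d"
    and G: "tfd_curve A D g T {a..b} \<gamma>" and S: "tfd_curve A D g T {b..d} \<sigma>" and eq: "\<gamma> b = \<sigma> b"
  shows "tfd_curve A D g T {a..d} (\<lambda>s. if s \<le> b then \<gamma> s else \<sigma> s)"
  unfolding tfd_curve_iff
proof (intro conjI ballI)
  let ?\<rho> = "\<lambda>s. if s \<le> b then \<gamma> s else \<sigma> s"
  have atlas: "smooth_atlas A" using sst unfolding sub_space_time_def by blast
  show "is_interval {a..d}" by (simp add: is_interval_cc)
  fix t assume t: "t \<in> {a..d}"
  consider "t < b" | "b < t" | "t = b" by linarith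
  then show "\<exists>c\<in>A. \<exists>\<epsilon>>0. loc D g T c ?\<rho> ({a..d} \<inter> cball t \<epsilon>)"
  proof cases
    case 1
    obtain c e where c: "c \<in> A" "e > 0" "loc D g T c \<gamma> ({a..b} \<inter> cball t e)"
      using G unfolding tfd_curve_iff using t 1 by (meson atLeastAtMost_iff less_imp_le)
    define e' where "e' = min e (b - t)"
    have e': "e' > 0" using c(2) 1 by (simp add: e'_def)
    have e'le: "e' \<le> e" "e' \<le> b - t" by (simp_all add: e'_def)
    have sub: "{max a (t - e')..min d (t + e')} \<subseteq> {a..b} \<inter> cball t e"
      unfolding Icc_cball using 1 bd e'le by auto
    have "loc D g T c \<gamma> {max a (t - e')..min d (t + e')}"
      by (rule loc_mono[OF c(3) _ sub]) (simp add: interval_cball_sets is_interval_cc)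
    then have "loc D g T c ?\<rho> {max a (t - e')..min d (t + e')}"
      by (rule loc_cong) (use e'le in auto)
    then have "loc D g T c ?\<rho> ({a..d} \<inter> cball t e')" by (simp only: Icc_cball)
    then show ?thesis using c(1) e' by blast
  next
    case 2
    obtain c e where c: "c \<in> A" "e > 0" "loc D g T c \<sigma> ({b..d} \<inter> cball t e)"
      using S unfolding tfd_curve_iff using t 2 by (meson atLeastAtMost_iff less_imp_le)
    define e' where "e' = min e (t - b)"
    have e': "e' > 0" using c(2) 2 by (simp add: e'_def)
    have e'le: "e' \<le> e" "e' \<le> t - b" by (simp_all add: e'_def)
    have sub: "{max a (t - e')..min d (t + e')} \<subseteq> {b..d} \<inter> cball t e"
      unfolding Icc_cball using 2 ab e'le by auto
    have "loc D g T c \<sigma> {max a (t - e')..min d (t + e')}"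
      by (rule loc_mono[OF c(3) _ sub]) (simp add: interval_cball_sets is_interval_cc)
    then have "loc D g T c ?\<rho> {max a (t - e')..min d (t + e')}"
    proof (rule loc_cong)
      fix s assume "s \<in> {max a (t - e')..min d (t + e')}"
      then have "b \<le> s" using e'le by auto
      then show "?\<rho> s = \<sigma> s" using eq by auto
    qed
    then have "loc D g T c ?\<rho> ({a..d} \<inter> cball t e')" by (simp only: Icc_cball)
    then show ?thesis using c(1) e' by blast
  next
    case 3
    obtain c1 e1 where c1: "c1 \<in> A" "e1 > 0" "loc D g T c1 \<gamma> ({a..b} \<inter> cball b e1)"
    proof -
      have "b \<in> {a..b}" using ab by simp
      then show ?thesis using G that unfolding tfd_curve_iff by blast
    qed
    obtain c2 e2 where c2: "c2 \<in> A" "e2 > 0" "loc D g T c2 \<sigma> ({b..d} \<inter> cball b e2)"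
    proof -
      have "b \<in> {b..d}" using bd by simp
      then show ?thesis using S that unfolding tfd_curve_iff by blast
    qed
    have sb: "\<sigma> b \<in> fst c1"
    proof -
      have "b \<in> {a..b} \<inter> cball b e1" using c1(2) ab by auto
      then have "\<gamma> b \<in> fst c1" using c1(3) unfolding loc_def by blast
      then show ?thesis using eq by simp
    qed
    define J2 where "J2 = {b..d} \<inter> cball b e2"
    have J2int: "is_interval J2" unfolding J2_def
      by (simp add: is_interval_cc Icc_cball)
    have cs: "continuous_on J2 \<sigma>" using loc_cont[OF atlas c2(1) c2(3)[folded J2_def] J2int] .
    have o1: "open (fst c1)" using atlas c1(1) unfolding smooth_atlas_def by blast
    obtain U where U: "open U" "U \<inter> J2 = \<sigma> -` fst c1 \<inter> J2"
      using cs o1 unfolding continuous_on_open_invariant by blast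
    have bJ2: "b \<in> J2" unfolding J2_def using bd c2(2) by auto
    then have "b \<in> U" using U(2) sb by blast
    then obtain \<delta> where \<delta>: "\<delta> > 0" "ball b \<delta> \<subseteq> U" using U(1) open_contains_ball by blast
    define dl where "dl = min (\<delta>/2) (min e2 (d - b))"
    have dl: "dl > 0" using \<delta>(1) c2(2) bd by (simp add: dl_def)
    have dlle: "dl \<le> \<delta>/2" "dl \<le> e2" "dl \<le> d - b" unfolding dl_def by linarith+
    have R2: "{b..b+dl} \<subseteq> J2" unfolding J2_def Icc_cball using dlle by auto
    have "loc D g T c2 \<sigma> {b..b+dl}"
      by (rule loc_mono[OF c2(3)[folded J2_def] _ R2]) (simp add: J2_def interval_cball_sets is_interval_cc)
    moreover have "\<sigma> ` {b..b+dl} \<subseteq> fst c1"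
    proof
      fix y assume "y \<in> \<sigma> ` {b..b+dl}"
      then obtain s where s: "s \<in> {b..b+dl}" "y = \<sigma> s" by blast
      then have "s \<in> ball b \<delta>" using \<delta>(1) dlle by (auto simp: dist_real_def)
      then have "s \<in> U \<inter> J2" using \<delta>(2) R2 s(1) by blast
      then show "y \<in> fst c1" using U(2) s(2) by blast
    qed
    ultimately have Rloc: "loc D g T c1 \<sigma> {b..b+dl}"
      using loc_chart[OF sst c2(1) c1(1), of b "b+dl"] dl by simp
    define dr where "dr = min e1 (b - a)"
    have dr: "dr > 0" using c1(2) ab by (simp add: dr_def)
    have drle: "dr \<le> e1" "dr \<le> b - a" by (simp_all add: dr_def)
    have L2: "{b-dr..b} \<subseteq> {a..b} \<inter> cball b e1" unfolding Icc_cball using drle by auto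
    have Lloc: "loc D g T c1 \<gamma> {b-dr..b}"
      by (rule loc_mono[OF c1(3) _ L2]) (simp add: interval_cball_sets is_interval_cc)
    define \<epsilon> where "\<epsilon> = min dl dr"
    have \<epsilon>: "\<epsilon> > 0" using dl dr by (simp add: \<epsilon>_def)
    have ele: "\<epsilon> \<le> dl" "\<epsilon> \<le> dr" by (simp_all add: \<epsilon>_def)
    have l1: "loc D g T c1 \<gamma> {b-\<epsilon>..b}"
      by (rule loc_mono[OF Lloc]) (use ele in auto)
    have l1': "loc D g T c1 ?\<rho> {b-\<epsilon>..b}"
      by (rule loc_cong[OF l1]) auto
    have r1: "loc D g T c1 \<sigma> {b..b+\<epsilon>}"
      by (rule loc_mono[OF Rloc]) (use ele in auto)
    have r1': "loc D g T c1 ?\<rho> {b..b+\<epsilon>}"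
      by (rule loc_cong[OF r1]) (use eq in auto)
    have gl: "loc D g T c1 ?\<rho> {b-\<epsilon>..b+\<epsilon>}"
      by (rule loc_glue[OF l1' r1']) (use \<epsilon> in auto)
    have m1: "max a (b - \<epsilon>) = b - \<epsilon>" using ele drle by simp
    have m2: "min d (b + \<epsilon>) = b + \<epsilon>" using ele dlle by simp
    have "{a..d} \<inter> cball b \<epsilon> = {b-\<epsilon>..b+\<epsilon>}"
      unfolding Icc_cball m1 m2 ..
    then have "loc D g T c1 ?\<rho> ({a..d} \<inter> cball t \<epsilon>)" using gl 3 by simp
    then show ?thesis using c1(1) \<epsilon> by blast
  qed
qed

lemma chron_trans:
  fixes A :: "('m::{t2_space, second_countable_topology}, 'e::euclidean_space) chart set"
  assumes sst: "sub_space_time A D k g T" and pq: "chron_rel A D g T p q" and qr: "chron_rel A D g T q r"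
  shows "chron_rel A D g T p r"
proof -
  obtain a b \<gamma> where G: "a < b" "tfd_curve A D g T {a..b} \<gamma>" "\<gamma> a = p" "\<gamma> b = q"
    using pq unfolding chron_rel_def by blast
  obtain c d \<sigma> where S: "c < d" "tfd_curve A D g T {c..d} \<sigma>" "\<sigma> c = q" "\<sigma> d = r"
    using qr unfolding chron_rel_def by blast
  have S': "tfd_curve A D g T {b..d + (b - c)} (\<lambda>s. \<sigma> (s - (b - c)))"
    using shift_tfd[OF S(2), of "b - c"] by simp
  have bd: "b < d + (b - c)" using S(1) by simp
  have C: "tfd_curve A D g T {a..d + (b - c)} (\<lambda>s. if s \<le> b then \<gamma> s else \<sigma> (s - (b - c)))"
    by (rule tfd_concat[OF sst G(1) bd G(2) S']) (use G(4) S(3) in simp)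
  show ?thesis unfolding chron_rel_def
  proof (intro exI conjI)
    show "a < d + (b - c)" using G(1) bd by simp
    show "(if a \<le> b then \<gamma> a else \<sigma> (a - (b - c))) = p" using G(1,3) by simp
    show "(if d + (b - c) \<le> b then \<gamma> (d + (b - c)) else \<sigma> (d + (b - c) - (b - c))) = r"
      using S(1,4) by simp
  qed (rule C)
qed


theorem theorem3p16:
  fixes A :: "('m::{t2_space, second_countable_topology}, 'e::euclidean_space) chart set"
    and D :: "('m, 'e) chart \<Rightarrow> 'm \<Rightarrow> 'e set"
    and k :: nat
    and g :: "('m, 'e) chart \<Rightarrow> 'm \<Rightarrow> 'e \<Rightarrow> 'e \<Rightarrow> real"
    and T :: "('m, 'e) chart \<Rightarrow> 'm \<Rightarrow> 'e"
  assumes "sub_space_time A D k g T"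
  shows "chronological A D g T \<longleftrightarrow>
    (\<forall>I \<gamma>. tfd_curve A D g T I \<gamma> \<longrightarrow>
       (\<forall>V. openin (top_of_set I) V \<longrightarrow>
            openin (pullback_topology I \<gamma> (alexandrov_topology A D g T)) V))"
proof
  assume chr: "chronological A D g T"
  let ?R = "chron_rel A D g T"
  let ?X = "alexandrov_topology A D g T"
  have irr: "\<not> ?R p p" for p using chr unfolding chronological_def by blast
  have opP: "openin ?X (I_plus A D g T p)" for p
    unfolding alexandrov_topology_def by (simp add: openin_topology_generated_by_iff generate_topology_on.Basis)
  have opM: "openin ?X (I_minus A D g T p)" for p
    unfolding alexandrov_topology_def by (simp add: openin_topology_generated_by_iff generate_topology_on.Basis)
  have opU: "openin ?X UNIV"
    unfolding alexandrov_topology_def by (simp add: openin_topology_generated_by_iff generate_topology_on.Basis)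
  show "\<forall>I \<gamma>. tfd_curve A D g T I \<gamma> \<longrightarrow>
       (\<forall>V. openin (top_of_set I) V \<longrightarrow> openin (pullback_topology I \<gamma> ?X) V)"
  proof (intro allI impI)
    fix I \<gamma> V
    assume tfd: "tfd_curve A D g T I \<gamma>" and V: "openin (top_of_set I) V"
    have intI: "is_interval I" using tfd unfolding tfd_curve_def by blast
    have R: "?R (\<gamma> u) (\<gamma> v)" if "u < v" "u \<in> I" "v \<in> I" for u v
      using restr_chron[OF tfd that] .
    obtain W where W: "open W" "V = I \<inter> W" using V by (auto simp: openin_open)
    show "openin (pullback_topology I \<gamma> ?X) V"
      unfolding openin_subopen[of _ V]
    proof
      fix t assume tV: "t \<in> V"
      then have tI: "t \<in> I" and tW: "t \<in> W" using W by auto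
      obtain r where r: "r > 0" "ball t r \<subseteq> W" using W(1) tW open_contains_ball by blast
      define UL where "UL = (if (\<exists>t1\<in>I. t - r < t1 \<and> t1 < t)
           then I_plus A D g T (\<gamma> (SOME t1. t1 \<in> I \<and> t - r < t1 \<and> t1 < t)) else UNIV)"
      define UR where "UR = (if (\<exists>t2\<in>I. t < t2 \<and> t2 < t + r)
           then I_minus A D g T (\<gamma> (SOME t2. t2 \<in> I \<and> t < t2 \<and> t2 < t + r)) else UNIV)"
      have oUL: "openin ?X UL" unfolding UL_def using opP opU by auto
      have oUR: "openin ?X UR" unfolding UR_def using opM opU by auto
      have tUL: "\<gamma> t \<in> UL"
      proof (cases "\<exists>t1\<in>I. t - r < t1 \<and> t1 < t")
        case True
        define t1 where "t1 = (SOME t1. t1 \<in> I \<and> t - r < t1 \<and> t1 < t)"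
        have "t1 \<in> I \<and> t - r < t1 \<and> t1 < t" unfolding t1_def
          by (rule someI_ex) (use True in blast)
        then show ?thesis using R[of t1 t] tI True unfolding UL_def I_plus_def t1_def[symmetric] by auto
      next
        case False then show ?thesis unfolding UL_def by (subst if_not_P) auto
      qed
      have tUR: "\<gamma> t \<in> UR"
      proof (cases "\<exists>t2\<in>I. t < t2 \<and> t2 < t + r")
        case True
        define t2 where "t2 = (SOME t2. t2 \<in> I \<and> t < t2 \<and> t2 < t + r)"
        have "t2 \<in> I \<and> t < t2 \<and> t2 < t + r" unfolding t2_def
          by (rule someI_ex) (use True in blast)
        then show ?thesis using R[of t t2] tI True unfolding UR_def I_minus_def t2_def[symmetric] by auto
      next
        case False then show ?thesis unfolding UR_def by (subst if_not_P) auto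
      qed
      have lower: "t - r < s" if sI: "s \<in> I" and sU: "\<gamma> s \<in> UL" for s
      proof (cases "\<exists>t1\<in>I. t - r < t1 \<and> t1 < t")
        case True
        define t1 where "t1 = (SOME t1. t1 \<in> I \<and> t - r < t1 \<and> t1 < t)"
        have t1: "t1 \<in> I \<and> t - r < t1 \<and> t1 < t" unfolding t1_def
          by (rule someI_ex) (use True in blast)
        have Rs: "?R (\<gamma> t1) (\<gamma> s)" using sU True unfolding UL_def I_plus_def t1_def[symmetric] by auto
        have "t1 < s"
        proof (rule ccontr)
          assume "\<not> t1 < s"
          then consider "s = t1" | "s < t1" by linarith
          then show False
          proof cases
            case 1 then show ?thesis using Rs irr by simp
          next
            case 2
            then have "?R (\<gamma> s) (\<gamma> t1)" using R sI t1 by blast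
            then show ?thesis using chron_trans[OF assms Rs] irr by blast
          qed
        qed
        then show ?thesis using t1 by linarith
      next
        case False
        show ?thesis
        proof (rule ccontr)
          assume "\<not> t - r < s"
          then have "s \<le> t - r" by simp
          have i1: "s \<le> t - r/2" "t - r/2 \<le> t" "t - r < t - r/2" "t - r/2 < t" using r(1) \<open>s \<le> t - r\<close> by auto
          have "t - r/2 \<in> I"
            using intI sI tI i1(1,2) unfolding is_interval_1 by blast
          then show False using False i1(3,4) by blast
        qed
      qed
      have upper: "s < t + r" if sI: "s \<in> I" and sU: "\<gamma> s \<in> UR" for s
      proof (cases "\<exists>t2\<in>I. t < t2 \<and> t2 < t + r")
        case True
        define t2 where "t2 = (SOME t2. t2 \<in> I \<and> t < t2 \<and> t2 < t + r)"
        have t2: "t2 \<in> I \<and> t < t2 \<and> t2 < t + r" unfolding t2_def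
          by (rule someI_ex) (use True in blast)
        have Rs: "?R (\<gamma> s) (\<gamma> t2)" using sU True unfolding UR_def I_minus_def t2_def[symmetric] by auto
        have "s < t2"
        proof (rule ccontr)
          assume "\<not> s < t2"
          then consider "s = t2" | "t2 < s" by linarith
          then show False
          proof cases
            case 1 then show ?thesis using Rs irr by simp
          next
            case 2
            then have "?R (\<gamma> t2) (\<gamma> s)" using R sI t2 by blast
            then show ?thesis using chron_trans[OF assms Rs] irr by blast
          qed
        qed
        then show ?thesis using t2 by linarith
      next
        case False
        show ?thesis
        proof (rule ccontr)
          assume "\<not> s < t + r"
          then have "t + r \<le> s" by simp
          have i1: "t + r/2 \<le> s" "t \<le> t + r/2" "t < t + r/2" "t + r/2 < t + r" using r(1) \<open>t + r \<le> s\<close> by auto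
          have "t + r/2 \<in> I"
            using intI sI tI i1(1,2) unfolding is_interval_1 by blast
          then show False using False i1(3,4) by blast
        qed
      qed
      show "\<exists>T. openin (pullback_topology I \<gamma> ?X) T \<and> t \<in> T \<and> T \<subseteq> V"
      proof (intro exI conjI)
        show "openin (pullback_topology I \<gamma> ?X) (\<gamma> -` (UL \<inter> UR) \<inter> I)"
          unfolding openin_pullback_topology using oUL oUR by blast
        show "t \<in> \<gamma> -` (UL \<inter> UR) \<inter> I" using tUL tUR tI by auto
        show "\<gamma> -` (UL \<inter> UR) \<inter> I \<subseteq> V"
        proof
          fix s assume s: "s \<in> \<gamma> -` (UL \<inter> UR) \<inter> I"
          then have "t - r < s" "s < t + r" using lower upper by auto
          then have "s \<in> ball t r" by (auto simp: dist_real_def)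
          then show "s \<in> V" using s r W by auto
        qed
      qed
    qed
  qed
next
  assume H: "\<forall>I \<gamma>. tfd_curve A D g T I \<gamma> \<longrightarrow>
       (\<forall>V. openin (top_of_set I) V \<longrightarrow>
            openin (pullback_topology I \<gamma> (alexandrov_topology A D g T)) V)"
  show "chronological A D g T"
    unfolding chronological_def
  proof
    assume "\<exists>p. chron_rel A D g T p p"
    then obtain a b \<gamma> where ab: "a < b" "tfd_curve A D g T {a..b} \<gamma>" "\<gamma> a = \<gamma> b"
      unfolding chron_rel_def by metis
    define V where "V = {a..b} \<inter> {..<(a+b)/2}"
    have "openin (top_of_set {a..b}) V" unfolding V_def
      by (intro openin_open_Int) auto
    then have "openin (pullback_topology {a..b} \<gamma> (alexandrov_topology A D g T)) V"
      using H ab(2) by blast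
    then obtain U where U: "V = \<gamma> -` U \<inter> {a..b}" unfolding openin_pullback_topology by blast
    have "a \<in> V" using ab(1) by (auto simp: V_def)
    then have "\<gamma> b \<in> U" using U ab(3) by auto
    then have "b \<in> V" using U ab(1) by auto
    then show False using ab(1) by (auto simp: V_def)
  qed
qed


end
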